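(* Let $p$ be a prime, $s\geq3$, $n\geq1$, $K\in\{\mathbb Z,\mathbb Z_p,\mathbb Z_{(p)}\}$, $F$ a field containing $K$, and $G=\langle a\rangle\cong C_{p^s}$. Let $\Delta$ be the $K$-representation of $G$ given by $\Delta(a)=\begin{pmatrix}\Delta_1(a)&U(a)\\0&\Delta_2(a)\end{pmatrix}$, where $\Delta_1=\delta_0^{(n)}\oplus\delta_1^{(n)}$, $\Delta_2=\delta_2^{(n)}\oplus\delta_s^{(n)}$, and $U(a)=\begin{pmatrix}E_n\otimes\langle1\rangle_0&J_n\otimes\langle1\rangle_0\\ E_n\otimes\langle1\rangle_1&J_n\otimes\langle1\rangle_1\end{pmatrix}$. Let $M_\Delta=K^N$ be the corresponding lattice with standard basis, let $v$ be the first basis vector, and define $T_\Delta:G\to\widehat{M_\Delta}$ by $T_\Delta(a^j)=jp^{-s}v+M_\Delta$ for $j=0,1,\dots,p^s-1$. Then $T_\Delta$ is a $1$-cocycle, and $T_\Delta$ is not cohomologous to zero at the element $b=a^{p^{s-1}}$ of order $p$, i.e. there is no $x\in FM_\Delta$ with $T_\Delta(b)=(b-1)x+M_\Delta$.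
   Context: For $t\geq0$ let $K_t=K[x]/(\Phi_{p^t}(x))$ ($\Phi_{p^t}$ the $p^t$-th cyclotomic polynomial; $K_0=K$), $\xi_t$ the image of $x$ (a primitive $p^t$-th root of unity), so $\xi_{t-1}=\xi_t^p$. Define ordered $K$-bases $B_0=\{1\}$, $B_1=(1,\xi_1,\dots,\xi_1^{p-2})$, and for $j\geq2$, $B_j$ is the concatenation of $\xi_j^0B_{j-1},\xi_j^1B_{j-1},\dots,\xi_j^{p-1}B_{j-1}$. For $t\leq s$, $\delta_t$ is the matrix representation of $G$ on $K_t$ (with $a$ acting as multiplication by $\xi_t$) in the basis $B_t$ (columns = coordinates of images of basis vectors); $\delta_t^{(n)}$ is the direct sum of $n$ copies. $E_n$ is the identity and $J_n$ the $n\times n$ Jordan block with ones on the diagonal (and superdiagonal). For $\omega\in K_t$ ($t=0,1$), $\langle\omega\rangle_t$ denotes the matrix with $|B_t|$ rows all of whose columns are zero except the last, which is the coordinate column of $\omega$ in $B_t$; in $E_n\otimes\langle\cdot\rangle_t$ its number of columns is $\deg\delta_2$, in $J_n\otimes\langle\cdot\rangle_t$ it is $\deg\delta_s$. $FM=F\otimes_KM$, $\widehat M=FM/M$ with $g(x+M)=gx+M$; a $1$-cocycle is $T:G\to\widehat M$ with $T(gh)=gT(h)+T(g)$. *)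

theory Defs
  imports "Jordan_Normal_Form.Matrix" "Jordan_Normal_Form.Jordan_Normal_Form" "HOL-Computational_Algebra.Primes"
begin

definition K_int :: "'f::field_char_0 set" where
  "K_int = range of_int"

definition K_loc :: "nat \<Rightarrow> 'f::field_char_0 set" where
  "K_loc p = {of_int a / of_int b | a b. \<not> int p dvd b}"

text \<open>The p-adic integers Z_p as the inverse limit of Z/p^k Z: compatible
  sequences of residues x k in [0, p^k).\<close>
definition Zp :: "nat \<Rightarrow> (nat \<Rightarrow> int) set" where
  "Zp p = {x. \<forall>k. 0 \<le> x k \<and> x k < int p ^ k \<and> x (Suc k) mod int p ^ k = x k}"

definition zp_add :: "nat \<Rightarrow> (nat \<Rightarrow> int) \<Rightarrow> (nat \<Rightarrow> int) \<Rightarrow> (nat \<Rightarrow> int)" where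
  "zp_add p x y = (\<lambda>k. (x k + y k) mod int p ^ k)"

definition zp_mul :: "nat \<Rightarrow> (nat \<Rightarrow> int) \<Rightarrow> (nat \<Rightarrow> int) \<Rightarrow> (nat \<Rightarrow> int)" where
  "zp_mul p x y = (\<lambda>k. (x k * y k) mod int p ^ k)"

definition zp_one :: "nat \<Rightarrow> (nat \<Rightarrow> int)" where
  "zp_one p = (\<lambda>k. 1 mod int p ^ k)"

definition Zp_embedding :: "nat \<Rightarrow> ((nat \<Rightarrow> int) \<Rightarrow> 'f::field) \<Rightarrow> bool" where
  "Zp_embedding p \<iota> \<longleftrightarrow> inj_on \<iota> (Zp p) \<and> \<iota> (zp_one p) = 1 \<and>
     (\<forall>x\<in>Zp p. \<forall>y\<in>Zp p. \<iota> (zp_add p x y) = \<iota> x + \<iota> y \<and> \<iota> (zp_mul p x y) = \<iota> x * \<iota> y)"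

definition admissible_K :: "nat \<Rightarrow> 'f::field_char_0 set \<Rightarrow> bool" where
  "admissible_K p K \<longleftrightarrow> K = K_int \<or> K = K_loc p \<or> (\<exists>\<iota>. Zp_embedding p \<iota> \<and> K = \<iota> ` Zp p)"

text \<open>deg delta_t = |B_t| = phi(p^t).\<close>
definition deg :: "nat \<Rightarrow> nat \<Rightarrow> nat" where
  "deg p t = (if t = 0 then 1 else p ^ (t - 1) * (p - 1))"

text \<open>Entries of delta_t(a), i.e. the matrix of multiplication by xi_t in the basis B_t
  (columns = coordinates of images).  For t = 1 this is the companion matrix of Phi_p
  in the basis 1, xi_1, ..., xi_1^(p-2).  For t >= 2, with D = |B_(t-1)|, the basis
  vector in position k*D + r is xi_t^k * (r-th vector of B_(t-1)); multiplication by
  xi_t sends it to position (k+1)*D + r if k < p-1, and for k = p-1 to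
  xi_t^p * (r-th vector) = xi_(t-1) * (r-th vector of B_(t-1)) in block 0,
  whose coordinates are column r of delta_(t-1)(a).\<close>
fun delta_entry :: "nat \<Rightarrow> nat \<Rightarrow> nat \<Rightarrow> nat \<Rightarrow> int" where
  "delta_entry p 0 i j = 1"
| "delta_entry p (Suc 0) i j = (if j + 2 < p then (if i = j + 1 then 1 else 0) else -1)"
| "delta_entry p (Suc (Suc t)) i j =
     (let D = deg p (Suc t) in
      if j div D + 1 < p then (if i = j + D then 1 else 0)
      else (if i < D then delta_entry p (Suc t) i (j mod D) else 0))"

definition delta :: "nat \<Rightarrow> nat \<Rightarrow> int mat" where
  "delta p t = mat (deg p t) (deg p t) (\<lambda>(i,j). delta_entry p t i j)"

definition copies :: "nat \<Rightarrow> int mat \<Rightarrow> int mat" where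
  "copies n A = diag_block_mat (replicate n A)"

definition kron :: "int mat \<Rightarrow> int mat \<Rightarrow> int mat" where
  "kron A B = mat (dim_row A * dim_row B) (dim_col A * dim_col B)
     (\<lambda>(i,j). A $$ (i div dim_row B, j div dim_col B) * B $$ (i mod dim_row B, j mod dim_col B))"

definition angle :: "int vec \<Rightarrow> nat \<Rightarrow> int mat" where
  "angle w c = mat (dim_vec w) c (\<lambda>(i,j). if j = c - 1 then w $ i else 0)"

text \<open>Coordinates of 1 = xi_t^0 in B_t (the first basis vector).\<close>
definition coord_one :: "nat \<Rightarrow> nat \<Rightarrow> int vec" where
  "coord_one p t = unit_vec (deg p t) 0"

definition Delta1 :: "nat \<Rightarrow> nat \<Rightarrow> int mat" where
  "Delta1 p n = diag_block_mat (replicate n (delta p 0) @ replicate n (delta p 1))"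

definition Delta2 :: "nat \<Rightarrow> nat \<Rightarrow> nat \<Rightarrow> int mat" where
  "Delta2 p s n = diag_block_mat (replicate n (delta p 2) @ replicate n (delta p s))"

definition U_mat :: "nat \<Rightarrow> nat \<Rightarrow> nat \<Rightarrow> int mat" where
  "U_mat p s n = four_block_mat
     (kron (1\<^sub>m n) (angle (coord_one p 0) (deg p 2))) (kron (jordan_block n 1) (angle (coord_one p 0) (deg p s)))
     (kron (1\<^sub>m n) (angle (coord_one p 1) (deg p 2))) (kron (jordan_block n 1) (angle (coord_one p 1) (deg p s)))"

definition Delta :: "nat \<Rightarrow> nat \<Rightarrow> nat \<Rightarrow> int mat" where
  "Delta p s n = four_block_mat (Delta1 p n) (U_mat p s n)
     (0\<^sub>m (dim_row (Delta2 p s n)) (dim_col (Delta1 p n))) (Delta2 p s n)"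

definition rankN :: "nat \<Rightarrow> nat \<Rightarrow> nat \<Rightarrow> nat" where
  "rankN p s n = dim_row (Delta p s n)"

definition act :: "nat \<Rightarrow> nat \<Rightarrow> nat \<Rightarrow> nat \<Rightarrow> 'f::field_char_0 mat" where
  "act p s n j = map_mat of_int (Delta p s n ^\<^sub>m j)"

definition in_lattice :: "'f set \<Rightarrow> 'f vec \<Rightarrow> bool" where
  "in_lattice K w \<longleftrightarrow> (\<forall>i<dim_vec w. w $ i \<in> K)"

text \<open>Representative in F M of T_Delta(a^j) = j p^(-s) v + M.\<close>
definition T_rep :: "nat \<Rightarrow> nat \<Rightarrow> nat \<Rightarrow> nat \<Rightarrow> 'f::field_char_0 vec" where
  "T_rep p s n j = (of_nat j / of_nat (p ^ s)) \<cdot>\<^sub>v unit_vec (rankN p s n) 0"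

end

theory Submission
  imports Defs
begin

lemma sum_lessThan_add_nat: fixes a b :: nat shows "(\<Sum>j<a+b. f j) = (\<Sum>j<a. f j) + (\<Sum>j<b. f (a+j))"
  by (induct b) (auto simp: add.assoc)

lemma sum_blocks: fixes n d :: nat shows "(\<Sum>j<n*d. f j) = (\<Sum>k<n. \<Sum>r<d. f (k*d + r))"
proof (induct n)
  case (Suc n)
  have "(\<Sum>j<Suc n*d. f j) = (\<Sum>j<n*d + d. f j)" by (simp add: add.commute)
  also have "\<dots> = (\<Sum>j<n*d. f j) + (\<Sum>r<d. f (n*d+r))" by (rule sum_lessThan_add_nat)
  finally show ?case using Suc by simp
qed simp

lemma dbm_rep:
  fixes M :: "'a::zero mat" and d n i j :: nat
  assumes M: "M \<in> carrier_mat d d"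
  shows "diag_block_mat (replicate n M) \<in> carrier_mat (n*d) (n*d)"
    "i < n*d \<Longrightarrow> j < n*d \<Longrightarrow> diag_block_mat (replicate n M) $$ (i,j) =
      (if i div d = j div d then M $$ (i mod d, j mod d) else 0)"
proof -
  show "diag_block_mat (replicate n M) \<in> carrier_mat (n*d) (n*d)"
    using M by (induct n) (auto simp: Let_def)
next
  assume "i < n*d" "j < n*d"
  then show "diag_block_mat (replicate n M) $$ (i,j) =
      (if i div d = j div d then M $$ (i mod d, j mod d) else 0)"
  proof (induct n arbitrary: i j)
    case 0 then show ?case by simp
  next
    case (Suc n)
    have R: "diag_block_mat (replicate n M) \<in> carrier_mat (n*d) (n*d)"
      using M by (induct n) (auto simp: Let_def)
    have d0: "d > 0" using Suc(2) by (cases d) auto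
    show ?case
    proof (cases "i < d")
      case True
      then show ?thesis using Suc(2,3) M R d0
        by (auto simp: Let_def div_eq_0_iff le_div_geq)
    next
      case False
      note iF = this
      show ?thesis
      proof (cases "j < d")
        case True
        then show ?thesis using Suc(2,3) M R d0 iF
          by (auto simp: Let_def le_div_geq)
      next
        case False
        have "i - d < n*d" "j - d < n*d" using Suc(2,3) iF False by auto
        from Suc(1)[OF this] show ?thesis using Suc(2,3) M R d0 iF False
          by (auto simp: Let_def le_div_geq le_mod_geq)
      qed
    qed
  qed
qed

lemma div_eq_iff_nat: assumes "(d::nat) > 0" shows "(m div d = k) = (k*d \<le> m \<and> m < k*d + d)"
proof
  assume h: "m div d = k"
  have "m = (m div d) * d + m mod d" by simp
  moreover have "m mod d < d" using assms by simp
  ultimately have "m = k*d + m mod d" using h by simp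
  then show "k*d \<le> m \<and> m < k*d + d" using \<open>m mod d < d\<close> by linarith
next
  assume "k*d \<le> m \<and> m < k*d + d"
  then show "m div d = k" by (intro div_nat_eqI) (auto simp: mult.commute)
qed


lemma mod_eq_when: assumes "(d::nat) > 0" "k*d \<le> m" "m < k*d + d" shows "m mod d = m - k*d"
proof -
  have "m div d = k" using div_eq_iff_nat[OF assms(1)] assms by auto
  moreover have "m = (m div d) * d + m mod d" by simp
  ultimately have "m = k*d + m mod d" by simp
  then show ?thesis by linarith
qed

lemma deg0[simp]: "deg p 0 = 1" by (simp add: deg_def)
lemma deg1[simp]: "deg p (Suc 0) = p - 1" by (simp add: deg_def)
lemma deg2: "deg p 2 = p * (p - 1)" by (simp add: deg_def)
lemma degSuc: "t \<ge> 1 \<Longrightarrow> deg p (Suc t) = p * deg p t"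
  by (cases t) (auto simp: deg_def)
lemma deg_pos: "p \<ge> 2 \<Longrightarrow> deg p t > 0" by (simp add: deg_def)

lemma delta_carrier: "delta p t \<in> carrier_mat (deg p t) (deg p t)"
  by (simp add: delta_def)
lemma delta_index: "i < deg p t \<Longrightarrow> j < deg p t \<Longrightarrow> delta p t $$ (i,j) = delta_entry p t i j"
  by (simp add: delta_def)

lemma kron_index: "i < dim_row A * dim_row B \<Longrightarrow> j < dim_col A * dim_col B \<Longrightarrow>
   kron A B $$ (i,j) = A $$ (i div dim_row B, j div dim_col B) * B $$ (i mod dim_row B, j mod dim_col B)"
  "dim_row (kron A B) = dim_row A * dim_row B" "dim_col (kron A B) = dim_col A * dim_col B"
  by (auto simp: kron_def)

lemma angle_index: "i < dim_vec w \<Longrightarrow> j < c \<Longrightarrow> angle w c $$ (i,j) = (if j = c - 1 then w $ i else 0)"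
  "dim_row (angle w c) = dim_vec w" "dim_col (angle w c) = c"
  by (auto simp: angle_def)

lemma kron_angle:
  assumes A: "A \<in> carrier_mat m m" and w: "dim_vec w = e" and i: "i < m*e" and j: "j < m*c"
  shows "kron A (angle w c) $$ (i,j) = (if j mod c = c - 1 then A $$ (i div e, j div c) * w $ (i mod e) else 0)"
proof -
  have e: "e > 0" using i by (cases e) auto
  have c: "c > 0" using j by (cases c) auto
  have "kron A (angle w c) $$ (i,j) = A $$ (i div e, j div c) * angle w c $$ (i mod e, j mod c)"
    using A w i j by (simp add: kron_index angle_index)
  also have "\<dots> = (if j mod c = c - 1 then A $$ (i div e, j div c) * w $ (i mod e) else 0)"
    using w e c by (simp add: angle_index)
  finally show ?thesis .
qed

locale L =
  fixes p s n :: nat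
  assumes p2: "p \<ge> 2" and s3: "s \<ge> 3" and n1: "n \<ge> 1"
begin

definition "d2 = deg p 2"
definition "ds = deg p s"
definition "DD = deg p (s - 1)"
definition "oa = n + n * (p - 1)"
definition "ob = oa + n * d2"
definition "NN = ob + n * ds"

lemma d2_pos: "d2 > 0" using p2 by (simp add: d2_def deg_pos)
lemma ds_pos: "ds > 0" using p2 by (simp add: ds_def deg_pos)
lemma DD_pos: "DD > 0" using p2 by (simp add: DD_def deg_pos)
lemma ds_DD: "ds = p * DD"
proof -
  have "s = Suc (s - 1)" "s - 1 \<ge> 1" using s3 by auto
  then show ?thesis unfolding ds_def DD_def by (metis degSuc)
qed
lemma d2_eq: "d2 = p * (p - 1)" by (simp add: d2_def deg2)

lemma Delta1_carrier: "Delta1 p n \<in> carrier_mat oa oa"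
proof -
  have "diag_block_mat (replicate n (delta p 0)) \<in> carrier_mat (n*1) (n*1)"
    by (rule dbm_rep(1)) (metis delta_carrier deg0)
  moreover have "diag_block_mat (replicate n (delta p 1)) \<in> carrier_mat (n*(p-1)) (n*(p-1))"
    by (rule dbm_rep(1)) (metis delta_carrier deg1 One_nat_def)
  ultimately show ?thesis unfolding Delta1_def diag_block_mat_append Let_def oa_def
    by auto
qed

lemma Delta1_index:
  assumes "i < oa" "j < oa"
  shows "Delta1 p n $$ (i,j) = (if i < n then (if j = i then 1 else 0) else if j < n then 0 else
      (if (i-n) div (p-1) = (j-n) div (p-1) then delta_entry p 1 ((i-n) mod (p-1)) ((j-n) mod (p-1)) else 0))"
proof -
  have C0: "delta p 0 \<in> carrier_mat 1 1" by (metis delta_carrier deg0)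
  have C1: "delta p 1 \<in> carrier_mat (p-1) (p-1)" by (metis delta_carrier deg1 One_nat_def)
  note B0 = dbm_rep[OF C0, where n=n] and B1 = dbm_rep[OF C1, where n=n]
  have pp: "p - 1 > 0" using p2 by auto
  let ?X = "diag_block_mat (replicate n (delta p 0))"
  let ?Y = "diag_block_mat (replicate n (delta p 1))"
  have XC: "?X \<in> carrier_mat n n" using B0(1) by simp
  have YC: "?Y \<in> carrier_mat (n*(p-1)) (n*(p-1))" using B1(1) by simp
  have D1: "Delta1 p n = four_block_mat ?X (0\<^sub>m n (n*(p-1))) (0\<^sub>m (n*(p-1)) n) ?Y"
    unfolding Delta1_def diag_block_mat_append Let_def using XC YC by simp
  have ij: "i < n + n*(p-1)" "j < n + n*(p-1)" using assms by (auto simp: oa_def)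
  have E: "Delta1 p n $$ (i,j) = (if i < n then if j < n then ?X $$ (i,j) else 0
      else if j < n then 0 else ?Y $$ (i - n, j - n))"
    unfolding D1 using XC YC ij by (simp add: index_mat_four_block)
  show ?thesis
  proof (cases "i < n")
    case True
    have d00: "delta p 0 $$ (0,0) = 1" by (simp add: delta_def)
    have "j < n \<Longrightarrow> ?X $$ (i,j) = (if i = j then 1 else 0)" using B0(2)[where i=i and j=j] True d00 by simp
    then show ?thesis unfolding E using True by auto
  next
    case False
    show ?thesis
    proof (cases "j < n")
      case True then show ?thesis unfolding E using False by simp
    next
      case F2: False
      have "i - n < n*(p-1)" "j - n < n*(p-1)" using ij False F2 by auto
      with B1(2)[where i="i-n" and j="j-n", OF this] show ?thesis unfolding E using False F2 pp
        by (simp add: delta_index)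
    qed
  qed
qed


end

context L begin
lemma Delta2_carrier: "Delta2 p s n \<in> carrier_mat (n*d2 + n*ds) (n*d2 + n*ds)"
proof -
  have "diag_block_mat (replicate n (delta p 2)) \<in> carrier_mat (n*d2) (n*d2)"
    by (rule dbm_rep(1)) (simp add: d2_def delta_carrier)
  moreover have "diag_block_mat (replicate n (delta p s)) \<in> carrier_mat (n*ds) (n*ds)"
    by (rule dbm_rep(1)) (simp add: ds_def delta_carrier)
  ultimately show ?thesis unfolding Delta2_def diag_block_mat_append Let_def
    by auto
qed

lemma Delta2_index:
  assumes ij: "i < n*d2 + n*ds" "j < n*d2 + n*ds"
  shows "Delta2 p s n $$ (i,j) = (if i < n*d2 then (if j < n*d2 then
      (if i div d2 = j div d2 then delta_entry p 2 (i mod d2) (j mod d2) else 0) else 0)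
     else if j < n*d2 then 0 else
      (if (i-n*d2) div ds = (j-n*d2) div ds then delta_entry p s ((i-n*d2) mod ds) ((j-n*d2) mod ds) else 0))"
proof -
  have C0: "delta p 2 \<in> carrier_mat d2 d2" by (simp add: d2_def delta_carrier)
  have C1: "delta p s \<in> carrier_mat ds ds" by (simp add: ds_def delta_carrier)
  note B0 = dbm_rep[OF C0, where n=n] and B1 = dbm_rep[OF C1, where n=n]
  let ?X = "diag_block_mat (replicate n (delta p 2))"
  let ?Y = "diag_block_mat (replicate n (delta p s))"
  have XC: "?X \<in> carrier_mat (n*d2) (n*d2)" using B0(1) by simp
  have YC: "?Y \<in> carrier_mat (n*ds) (n*ds)" using B1(1) by simp
  have D1: "Delta2 p s n = four_block_mat ?X (0\<^sub>m (n*d2) (n*ds)) (0\<^sub>m (n*ds) (n*d2)) ?Y"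
    unfolding Delta2_def diag_block_mat_append Let_def using XC YC by simp
  have E: "Delta2 p s n $$ (i,j) = (if i < n*d2 then if j < n*d2 then ?X $$ (i,j) else 0
      else if j < n*d2 then 0 else ?Y $$ (i - n*d2, j - n*d2))"
    unfolding D1 using XC YC ij by (simp add: index_mat_four_block)
  show ?thesis
  proof (cases "i < n*d2")
    case True
    show ?thesis
    proof (cases "j < n*d2")
      case True2: True
      have "?X $$ (i,j) = (if i div d2 = j div d2 then delta_entry p 2 (i mod d2) (j mod d2) else 0)"
        using B0(2)[where i=i and j=j] True True2 d2_pos by (simp add: delta_index d2_def)
      then show ?thesis unfolding E using True True2 by simp
    qed (simp add: E True)
  next
    case False
    show ?thesis
    proof (cases "j < n*d2")
      case True then show ?thesis unfolding E using False by simp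
    next
      case F2: False
      have "i - n*d2 < n*ds" "j - n*d2 < n*ds" using ij False F2 by auto
      with B1(2)[where i="i-n*d2" and j="j-n*d2", OF this] show ?thesis unfolding E using False F2 ds_pos
        by (simp add: delta_index ds_def)
    qed
  qed
qed

end

context L begin
lemma U_carrier: "U_mat p s n \<in> carrier_mat oa (n*d2 + n*ds)"
  unfolding U_mat_def carrier_mat_def
  by (simp add: kron_index(2,3) angle_index(2,3) coord_one_def oa_def d2_def ds_def)

lemma U_index:
  assumes i: "i < oa" and j: "j < n*d2 + n*ds"
  shows "U_mat p s n $$ (i,j) = (if i < n then
      (if j < n*d2 then (if j div d2 = i \<and> j mod d2 = d2 - 1 then 1 else 0)
       else (if ((j - n*d2) div ds = i \<or> (j - n*d2) div ds = Suc i) \<and> (j - n*d2) mod ds = ds - 1 then 1 else 0))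
     else if (i - n) mod (p - 1) = 0 then
      (if j < n*d2 then (if j div d2 = (i-n) div (p-1) \<and> j mod d2 = d2 - 1 then 1 else 0)
       else (if ((j - n*d2) div ds = (i-n) div (p-1) \<or> (j - n*d2) div ds = Suc ((i-n) div (p-1))) \<and> (j - n*d2) mod ds = ds - 1 then 1 else 0))
     else 0)"
proof -
  have pp: "p - 1 > 0" using p2 by auto
  let ?X1 = "kron (1\<^sub>m n) (angle (coord_one p 0) d2)"
  let ?X2 = "kron (jordan_block n 1) (angle (coord_one p 0) ds)"
  let ?X3 = "kron (1\<^sub>m n) (angle (coord_one p 1) d2)"
  let ?X4 = "kron (jordan_block n 1) (angle (coord_one p 1) ds)"
  have dims: "dim_row ?X1 = n" "dim_col ?X1 = n*d2" "dim_row ?X4 = n*(p-1)" "dim_col ?X4 = n*ds"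
    by (simp_all add: kron_index(2,3) angle_index(2,3) coord_one_def d2_def ds_def)
  have E: "U_mat p s n $$ (i,j) = (if i < n then if j < n*d2 then ?X1 $$ (i,j) else ?X2 $$ (i, j - n*d2)
      else if j < n*d2 then ?X3 $$ (i - n, j) else ?X4 $$ (i - n, j - n*d2))"
    unfolding U_mat_def d2_def[symmetric] ds_def[symmetric] using dims i j by (simp add: index_mat_four_block oa_def)
  have J1: "jordan_block n (1::int) \<in> carrier_mat n n" by (simp add: jordan_block_def)
  have I1: "1\<^sub>m n \<in> (carrier_mat n n :: int mat set)" by simp
  show ?thesis
  proof (cases "i < n")
    case True
    show ?thesis
    proof (cases "j < n*d2")
      case True2: True
      have "?X1 $$ (i,j) = (if j mod d2 = d2 - 1 then 1\<^sub>m n $$ (i div 1, j div d2) * coord_one p 0 $ (i mod 1) else 0)"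
        by (rule kron_angle[OF I1]) (use True True2 in \<open>auto simp: coord_one_def d2_def\<close>)
      also have "\<dots> = (if j div d2 = i \<and> j mod d2 = d2 - 1 then 1 else 0)"
      proof -
        have "j div d2 < n" using True2 by (simp add: less_mult_imp_div_less)
        then show ?thesis using True by (auto simp: coord_one_def)
      qed
      finally show ?thesis unfolding E using True True2 by simp
    next
      case F2: False
      have jj: "j - n*d2 < n*ds" using j F2 by auto
      have "?X2 $$ (i,j - n*d2) = (if (j - n*d2) mod ds = ds - 1 then jordan_block n 1 $$ (i div 1, (j - n*d2) div ds) * coord_one p 0 $ (i mod 1) else 0)"
        by (rule kron_angle[OF J1]) (use True jj in \<open>auto simp: coord_one_def ds_def\<close>)
      also have "\<dots> = (if ((j - n*d2) div ds = i \<or> (j - n*d2) div ds = Suc i) \<and> (j - n*d2) mod ds = ds - 1 then 1 else 0)"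
      proof -
        have "(j - n*d2) div ds < n" using jj by (simp add: less_mult_imp_div_less)
        then show ?thesis using True by (auto simp: coord_one_def)
      qed
      finally show ?thesis unfolding E using True F2 by simp
    qed
  next
    case False
    have ii: "i - n < n * (p-1)" using i False by (auto simp: oa_def)
    have idv: "(i - n) div (p-1) < n" using ii pp by (simp add: less_mult_imp_div_less mult.commute)
    show ?thesis
    proof (cases "j < n*d2")
      case True2: True
      have "?X3 $$ (i-n,j) = (if j mod d2 = d2 - 1 then 1\<^sub>m n $$ ((i-n) div (p-1), j div d2) * coord_one p 1 $ ((i-n) mod (p-1)) else 0)"
        by (rule kron_angle[OF I1]) (use ii True2 in \<open>auto simp: coord_one_def d2_def\<close>)
      also have "\<dots> = (if (i - n) mod (p - 1) = 0 then (if j div d2 = (i-n) div (p-1) \<and> j mod d2 = d2 - 1 then 1 else 0) else 0)"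
      proof -
        have "j div d2 < n" using True2 by (simp add: less_mult_imp_div_less)
        moreover have "(i-n) mod (p-1) < p - 1" using pp by simp
        ultimately show ?thesis using idv pp by (auto simp: coord_one_def)
      qed
      finally show ?thesis unfolding E using False True2 by simp
    next
      case F2: False
      have jj: "j - n*d2 < n*ds" using j F2 by auto
      have "?X4 $$ (i-n,j - n*d2) = (if (j - n*d2) mod ds = ds - 1 then jordan_block n 1 $$ ((i-n) div (p-1), (j - n*d2) div ds) * coord_one p 1 $ ((i-n) mod (p-1)) else 0)"
        by (rule kron_angle[OF J1]) (use ii jj in \<open>auto simp: coord_one_def ds_def\<close>)
      also have "\<dots> = (if (i - n) mod (p - 1) = 0 then (if ((j - n*d2) div ds = (i-n) div (p-1) \<or> (j - n*d2) div ds = Suc ((i-n) div (p-1))) \<and> (j - n*d2) mod ds = ds - 1 then 1 else 0) else 0)"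
      proof -
        have "(j - n*d2) div ds < n" using jj by (simp add: less_mult_imp_div_less)
        moreover have "(i-n) mod (p-1) < p - 1" using pp by simp
        ultimately show ?thesis using idv pp by (auto simp: coord_one_def)
      qed
      finally show ?thesis unfolding E using False F2 by simp
    qed
  qed
qed

end

lemma blk_last: assumes "(d::nat) > 0" shows "(m div d = k \<and> m mod d = d - 1) = (m = k*d + d - 1)"
proof
  assume h: "m div d = k \<and> m mod d = d - 1"
  have "m = (m div d) * d + m mod d" by simp
  then show "m = k*d + d - 1" using h assms by simp
next
  assume h: "m = k*d + d - 1"
  have "m div d = k" using assms h by (subst div_eq_iff_nat) auto
  moreover have "m mod d = d - 1" using assms h by (subst mod_eq_when[of d k]) auto
  ultimately show "m div d = k \<and> m mod d = d - 1" by simp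
qed

context L begin

definition "AM = Delta p s n"

lemma oa_ge: "oa \<ge> n + (p - 1)" using n1 p2 unfolding oa_def
  by (metis add_le_mono1 mult_1 mult_le_mono1 le_add2 add_le_mono le_refl)

lemma AM_carrier: "AM \<in> carrier_mat NN NN"
  using Delta1_carrier Delta2_carrier unfolding AM_def Delta_def NN_def ob_def carrier_mat_def
  by (simp add: U_carrier)

lemma AM_index: assumes "i < NN" "j < NN"
  shows "AM $$ (i,j) = (if i < oa then (if j < oa then Delta1 p n $$ (i,j) else U_mat p s n $$ (i, j - oa))
     else if j < oa then 0 else Delta2 p s n $$ (i - oa, j - oa))"
  using assms Delta1_carrier Delta2_carrier unfolding AM_def Delta_def NN_def ob_def carrier_mat_def
  by (simp add: index_mat_four_block)

lemma q_lt: assumes "i < oa" "n \<le> i" shows "(i - n) div (p - 1) < n"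
proof -
  have "i - n < n * (p - 1)" using assms by (auto simp: oa_def)
  then show ?thesis by (simp add: less_mult_imp_div_less)
qed

lemma U_row:
  assumes i: "i < oa" and j: "j < n*d2 + n*ds"
    and q: "(i < n \<and> q = i) \<or> (n \<le> i \<and> (i - n) mod (p - 1) = 0 \<and> q = (i - n) div (p - 1))"
  shows "U_mat p s n $$ (i,j) = of_bool (j = q*d2 + d2 - 1) + of_bool (j = n*d2 + q*ds + ds - 1)
     + of_bool (j = n*d2 + Suc q * ds + ds - 1)"
proof -
  have qn: "q < n"
  proof (cases "i < n")
    case True then show ?thesis using q by auto
  next
    case False then show ?thesis using q q_lt[OF i] by auto
  qed
  have U: "U_mat p s n $$ (i,j) = (if j < n*d2 then (if j div d2 = q \<and> j mod d2 = d2 - 1 then 1 else 0)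
       else (if ((j - n*d2) div ds = q \<or> (j - n*d2) div ds = Suc q) \<and> (j - n*d2) mod ds = ds - 1 then 1 else 0))"
  proof (cases "i < n")
    case True
    then have "q = i" using q by auto
    then show ?thesis using U_index[OF i j] True by simp
  next
    case False
    then have "(i - n) mod (p - 1) = 0" "q = (i - n) div (p - 1)" using q by auto
    then show ?thesis using U_index[OF i j] False by simp
  qed
  show ?thesis
  proof (cases "j < n*d2")
    case True
    have "q*d2 + d2 \<le> n * d2" using qn
      by (metis Suc_leI add.commute mult_Suc mult_le_mono1)
    then have "j \<noteq> n*d2 + q*ds + ds - 1" "j \<noteq> n*d2 + Suc q * ds + ds - 1" using True ds_pos by auto
    then show ?thesis unfolding U using True blk_last[OF d2_pos, of j q] by simp
  next
    case False
    have "q*d2 + d2 \<le> n * d2" using qn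
      by (metis Suc_leI add.commute mult_Suc mult_le_mono1)
    then have "j \<noteq> q*d2 + d2 - 1" using False d2_pos by auto
    moreover have "(j - n*d2 = q*ds + ds - 1) = (j = n*d2 + q*ds + ds - 1)"
      "(j - n*d2 = Suc q*ds + ds - 1) = (j = n*d2 + Suc q*ds + ds - 1)" using False ds_pos by auto
    ultimately have R: "of_bool (j = q*d2 + d2 - 1) + of_bool (j = n*d2 + q*ds + ds - 1)
     + of_bool (j = n*d2 + Suc q * ds + ds - 1) = (of_bool (j - n*d2 = q*ds + ds - 1)
     + of_bool (j - n*d2 = Suc q*ds + ds - 1) :: int)" by simp
    have B1: "((j - n*d2) div ds = q \<and> (j - n*d2) mod ds = ds - 1) = (j - n*d2 = q*ds + ds - 1)"
      by (rule blk_last[OF ds_pos])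
    have B2: "((j - n*d2) div ds = Suc q \<and> (j - n*d2) mod ds = ds - 1) = (j - n*d2 = Suc q*ds + ds - 1)"
      by (rule blk_last[OF ds_pos])
    have ne: "q*ds + ds - 1 \<noteq> Suc q*ds + ds - 1" using ds_pos by simp
    show ?thesis unfolding U R using False B1 B2 ne
      by (smt (verit) of_bool_eq(1) of_bool_eq(2))
  qed
qed

lemma U_row_zero: assumes "i < oa" "j < n*d2 + n*ds" "n \<le> i" "(i - n) mod (p - 1) \<noteq> 0"
  shows "U_mat p s n $$ (i,j) = 0"
  using U_index[OF assms(1,2)] assms(3,4) by simp



lemma n_le_oa: "n \<le> oa" unfolding oa_def by simp
lemma oa_ob: "oa \<le> ob" unfolding ob_def by simp
lemma NN_eq: "NN = oa + (n*d2 + n*ds)" unfolding NN_def ob_def by simp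

lemma R0: assumes j: "j < NN"
  shows "AM $$ (0,j) = of_bool (j = 0) + of_bool (j = oa + d2 - 1) + of_bool (j = ob + ds - 1)
     + of_bool (j = ob + ds + ds - 1)"
proof -
  have i0: "0 < NN" "0 < oa" "(0::nat) < n" using j n1 n_le_oa by auto
  show ?thesis
  proof (cases "j < oa")
    case True
    have "AM $$ (0,j) = Delta1 p n $$ (0,j)" using AM_index[OF i0(1) j] True i0 by simp
    also have "\<dots> = of_bool (j = 0)" using Delta1_index[OF i0(2) True] i0 by simp
    finally show ?thesis using True oa_ob d2_pos ds_pos by auto
  next
    case False
    have jj: "j - oa < n*d2 + n*ds" using j False NN_eq by simp
    have "AM $$ (0,j) = U_mat p s n $$ (0, j - oa)" using AM_index[OF i0(1) j] False i0 by simp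
    also have "\<dots> = of_bool (j - oa = 0*d2 + d2 - 1) + of_bool (j - oa = n*d2 + 0*ds + ds - 1)
     + of_bool (j - oa = n*d2 + Suc 0 * ds + ds - 1)"
      by (rule U_row[OF i0(2) jj]) (use i0 in simp)
    also have "\<dots> = of_bool (j = oa + d2 - 1) + of_bool (j = ob + ds - 1) + of_bool (j = ob + ds + ds - 1)"
    proof -
      have e1: "(j - oa = 0*d2 + d2 - 1) = (j = oa + d2 - 1)" using False d2_pos by auto
      have e2: "(j - oa = n*d2 + 0*ds + ds - 1) = (j = ob + ds - 1)" using False ds_pos unfolding ob_def by auto
      have e3: "(j - oa = n*d2 + Suc 0*ds + ds - 1) = (j = ob + ds + ds - 1)" using False ds_pos unfolding ob_def by auto
      show ?thesis by (simp only: e1 e2 e3)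
    qed
    finally show ?thesis using False i0 by simp
  qed
qed

lemma R1: assumes r: "r < p - 1" and j: "j < NN"
  shows "AM $$ (n + r,j) = (if n \<le> j \<and> j < n + (p - 1) then delta_entry p 1 r (j - n) else 0)
     + of_bool (r = 0) * (of_bool (j = oa + d2 - 1) + of_bool (j = ob + ds - 1)
     + of_bool (j = ob + ds + ds - 1))"
proof -
  have pp: "p - 1 > 0" using p2 by simp
  have i0: "n + r < NN" "n + r < oa" using r oa_ge NN_eq by auto
  show ?thesis
  proof (cases "j < oa")
    case True
    have "AM $$ (n + r,j) = Delta1 p n $$ (n + r,j)" using AM_index[OF i0(1) j] True i0 by simp
    also have "\<dots> = (if j < n then 0 else
      (if r div (p-1) = (j-n) div (p-1) then delta_entry p 1 (r mod (p-1)) ((j-n) mod (p-1)) else 0))"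
      using Delta1_index[OF i0(2) True] by simp
    also have "\<dots> = (if n \<le> j \<and> j < n + (p - 1) then delta_entry p 1 r (j - n) else 0)"
    proof (cases "j < n")
      case False
      have "(0 = (j-n) div (p-1)) = (j - n < p - 1)" using pp by (auto simp: div_eq_0_iff)
      then show ?thesis using False r pp by auto
    qed simp
    finally show ?thesis using True oa_ob d2_pos ds_pos by auto
  next
    case False
    have jj: "j - oa < n*d2 + n*ds" using j False NN_eq by simp
    have "AM $$ (n + r,j) = U_mat p s n $$ (n + r, j - oa)" using AM_index[OF i0(1) j] False i0 by simp
    also have "\<dots> = of_bool (r = 0) * (of_bool (j = oa + d2 - 1) + of_bool (j = ob + ds - 1)
     + of_bool (j = ob + ds + ds - 1))"
    proof (cases "r = 0")
      case True
      have "U_mat p s n $$ (n + r, j - oa) = of_bool (j - oa = 0*d2 + d2 - 1) + of_bool (j - oa = n*d2 + 0*ds + ds - 1)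
        + of_bool (j - oa = n*d2 + Suc 0 * ds + ds - 1)"
        by (rule U_row[OF i0(2) jj]) (use True pp in simp)
      also have "\<dots> = of_bool (j = oa + d2 - 1) + of_bool (j = ob + ds - 1) + of_bool (j = ob + ds + ds - 1)"
      proof -
        have e1: "(j - oa = 0*d2 + d2 - 1) = (j = oa + d2 - 1)" using False d2_pos by auto
        have e2: "(j - oa = n*d2 + 0*ds + ds - 1) = (j = ob + ds - 1)" using False ds_pos unfolding ob_def by auto
        have e3: "(j - oa = n*d2 + Suc 0*ds + ds - 1) = (j = ob + ds + ds - 1)" using False ds_pos unfolding ob_def by auto
        show ?thesis by (simp only: e1 e2 e3)
      qed
      finally show ?thesis using True by simp
    next
      case F: False
      have "U_mat p s n $$ (n + r, j - oa) = 0" by (rule U_row_zero[OF i0(2) jj]) (use r F in simp_all)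
      then show ?thesis using F by simp
    qed
    finally show ?thesis using False oa_ge by auto
  qed
qed

lemma R2: assumes r: "r < d2" and j: "j < NN"
  shows "AM $$ (oa + r,j) = (if oa \<le> j \<and> j < oa + d2 then delta_entry p 2 r (j - oa) else 0)"
proof -
  have i0: "oa + r < NN" using r NN_eq n1
    by (metis add_less_cancel_left less_le_trans mult_le_mono1 mult_1 trans_less_add1)
  show ?thesis
  proof (cases "j < oa")
    case True
    then show ?thesis using AM_index[OF i0 j] by simp
  next
    case False
    have jj: "j - oa < n*d2 + n*ds" using j False NN_eq by simp
    have rr: "r < n*d2" using r n1 by (metis less_le_trans mult_le_mono1 mult_1)
    have "AM $$ (oa + r,j) = Delta2 p s n $$ (r, j - oa)" using AM_index[OF i0 j] False by simp
    also have "\<dots> = (if j - oa < n*d2 then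
      (if r div d2 = (j - oa) div d2 then delta_entry p 2 (r mod d2) ((j - oa) mod d2) else 0) else 0)"
      using Delta2_index[of r "j - oa"] jj rr by simp
    also have "\<dots> = (if oa \<le> j \<and> j < oa + d2 then delta_entry p 2 r (j - oa) else 0)"
    proof -
      have "(0 = (j - oa) div d2) = (j - oa < d2)" using d2_pos by (auto simp: div_eq_0_iff)
      moreover have "d2 \<le> n * d2" using n1 by simp
      moreover have "j - oa < d2 \<Longrightarrow> j - oa < n*d2" using \<open>d2 \<le> n * d2\<close> by linarith
      ultimately show ?thesis using False r d2_pos by auto
    qed
    finally show ?thesis .
  qed
qed

lemma Rs: assumes k: "k < n" and r: "r < ds" and j: "j < NN"
  shows "AM $$ (ob + k*ds + r,j) = (if ob + k*ds \<le> j \<and> j < ob + k*ds + ds then delta_entry p s r (j - (ob + k*ds)) else 0)"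
proof -
  have kd: "k*ds + r < n*ds"
  proof -
    have "k*ds + r < k*ds + ds" using r by simp
    also have "\<dots> = Suc k * ds" by simp
    also have "\<dots> \<le> n * ds" using k by (intro mult_le_mono1) simp
    finally show ?thesis .
  qed
  have i0: "ob + k*ds + r < NN" using kd unfolding NN_def by simp
  have kdiv: "(k*ds + r) div ds = k" "(k*ds + r) mod ds = r" using r ds_pos by auto
  show ?thesis
  proof (cases "j < ob")
    case True
    have "AM $$ (ob + k*ds + r,j) = 0"
    proof (cases "j < oa")
      case True
      then show ?thesis using AM_index[OF i0 j] oa_ob by simp
    next
      case False
      have jj: "j - oa < n*d2 + n*ds" using j False NN_eq by simp
      have "AM $$ (ob + k*ds + r,j) = Delta2 p s n $$ (ob + k*ds + r - oa, j - oa)"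
        using AM_index[OF i0 j] False oa_ob by simp
      also have "\<dots> = 0"
      proof -
        have "j - oa < n*d2" using True False unfolding ob_def by simp
        moreover have "\<not> ob + k*ds + r - oa < n*d2" unfolding ob_def by simp
        moreover have "ob + k*ds + r - oa < n*d2 + n*ds" using kd unfolding ob_def by simp
        ultimately show ?thesis using Delta2_index[of "ob + k*ds + r - oa" "j - oa"] jj by simp
      qed
      finally show ?thesis .
    qed
    then show ?thesis using True by simp
  next
    case False
    have jj: "j - ob < n*ds" using j False unfolding NN_def by simp
    have "AM $$ (ob + k*ds + r,j) = Delta2 p s n $$ (n*d2 + (k*ds + r), n*d2 + (j - ob))"
      using AM_index[OF i0 j] False oa_ob unfolding ob_def by (simp add: algebra_simps)
    also have "\<dots> = (if (k*ds + r) div ds = (j - ob) div ds then delta_entry p s ((k*ds + r) mod ds) ((j - ob) mod ds) else 0)"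
      using Delta2_index[of "n*d2 + (k*ds + r)" "n*d2 + (j - ob)"] jj kd by simp
    also have "\<dots> = (if ob + k*ds \<le> j \<and> j < ob + k*ds + ds then delta_entry p s r (j - (ob + k*ds)) else 0)"
    proof -
      have "((j - ob) div ds = k) = (k*ds \<le> j - ob \<and> j - ob < k*ds + ds)" by (rule div_eq_iff_nat[OF ds_pos])
      moreover have "k*ds \<le> j - ob \<Longrightarrow> j - ob < k*ds + ds \<Longrightarrow> (j - ob) mod ds = j - ob - k*ds"
        by (rule mod_eq_when[OF ds_pos])
      ultimately show ?thesis unfolding kdiv using False by auto
    qed
    finally show ?thesis .
  qed
qed

lemma C0: assumes i: "i < NN" shows "AM $$ (i,0) = of_bool (i = 0)"
proof -
  have j0: "0 < NN" "0 < oa" "(0::nat) < n" using i n1 n_le_oa by auto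
  show ?thesis
  proof (cases "i < oa")
    case True
    then show ?thesis using AM_index[OF i j0(1)] Delta1_index[OF True j0(2)] j0 by auto
  next
    case False
    then show ?thesis using AM_index[OF i j0(1)] j0 by auto
  qed
qed

end

lemma sum_interval:
  fixes h :: "nat \<Rightarrow> 'a::comm_monoid_add"
  assumes "o' + d \<le> N"
  shows "(\<Sum>j<N. if o' \<le> j \<and> j < o' + d then h (j - o') else 0) = (\<Sum>c<d. h c)"
proof -
  have N: "N = o' + (d + (N - o' - d))" using assms by simp
  have "(\<Sum>j<N. if o' \<le> j \<and> j < o' + d then h (j - o') else 0)
     = (\<Sum>j<o' + (d + (N - o' - d)). if o' \<le> j \<and> j < o' + d then h (j - o') else 0)"
    using N by simp
  also have "\<dots> = (\<Sum>j<o'. if o' \<le> j \<and> j < o' + d then h (j - o') else 0)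
     + ((\<Sum>c<d. if o' \<le> o' + c \<and> o' + c < o' + d then h (o' + c - o') else 0)
       + (\<Sum>c<N - o' - d. if o' \<le> o' + (d + c) \<and> o' + (d + c) < o' + d then h (o' + (d + c) - o') else 0))"
    by (simp only: sum_lessThan_add_nat add.assoc)
  also have "\<dots> = (\<Sum>c<d. h c)" by simp
  finally show ?thesis .
qed

lemma sum_delta_nat:
  fixes f :: "nat \<Rightarrow> 'a::comm_ring_1"
  shows "(\<Sum>j<N. of_bool (j = t) * f j) = (if t < N then f t else 0)"
proof -
  have "(\<Sum>j<N. of_bool (j = t) * f j) = (\<Sum>j<N. if j = t then f j else 0)"
    by (intro sum.cong) auto
  also have "\<dots> = (if t < N then f t else 0)" by (simp add: sum.delta)
  finally show ?thesis .
qed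

lemma pow_mat_add: assumes "A \<in> carrier_mat m m"
  shows "A ^\<^sub>m (a + b) = A ^\<^sub>m a * A ^\<^sub>m b"
proof (induct b)
  case 0 then show ?case using assms by simp
next
  case (Suc b)
  have "A ^\<^sub>m (a + Suc b) = A ^\<^sub>m (a + b) * A" by simp
  also have "\<dots> = (A ^\<^sub>m a * A ^\<^sub>m b) * A" using Suc by simp
  also have "\<dots> = A ^\<^sub>m a * (A ^\<^sub>m b * A)"
    by (rule assoc_mult_mat[of _ m m _ m _ m]) (use assms in auto)
  finally show ?case by simp
qed

lemma sum_mod_period:
  fixes f :: "nat \<Rightarrow> 'a::comm_ring_1"
  shows "(\<Sum>l<p*q. f (l mod p)) = of_nat q * (\<Sum>l<p. f l)"
proof -
  have "(\<Sum>l<p*q. f (l mod p)) = (\<Sum>l<q*p. f (l mod p))" by (simp add: mult.commute)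
  also have "\<dots> = (\<Sum>k<q. \<Sum>r<p. f ((k*p + r) mod p))" by (rule sum_blocks)
  also have "\<dots> = (\<Sum>k<q. \<Sum>r<p. f r)" by (intro sum.cong refl) simp
  finally show ?thesis by simp
qed

lemma delta_shift_hi:
  fixes y :: "nat \<Rightarrow> 'a::comm_ring_1"
  assumes p: "p \<ge> 2" and b: "1 \<le> b" "b < p" and c: "c < deg p (Suc t)"
  shows "(\<Sum>j<p * deg p (Suc t). of_int (delta_entry p (Suc (Suc t)) (b * deg p (Suc t) + c) j) * y j)
     = y ((b - 1) * deg p (Suc t) + c)"
proof -
  let ?D = "deg p (Suc t)"
  have D: "?D > 0" using p by (simp add: deg_pos)
  have bD: "b * ?D = ?D + (b - 1) * ?D" using b by (cases b) auto
  have E: "delta_entry p (Suc (Suc t)) (b * ?D + c) j = of_bool (j = (b - 1) * ?D + c)" if j: "j < p * ?D" for j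
  proof (cases "j = (b - 1) * ?D + c")
    case True
    have "j div ?D = b - 1" using True c D by simp
    then show ?thesis using True b bD by (simp add: Let_def)
  next
    case False
    have "b * ?D + c \<noteq> j + ?D" using False bD by simp
    moreover have "\<not> b * ?D + c < ?D" using b bD by simp
    ultimately show ?thesis using False by (simp add: Let_def)
  qed
  have "(\<Sum>j<p * ?D. of_int (delta_entry p (Suc (Suc t)) (b * ?D + c) j) * y j)
      = (\<Sum>j<p * ?D. of_bool (j = (b - 1) * ?D + c) * y j)"
    by (intro sum.cong refl) (auto simp del: delta_entry.simps simp add: E)
  also have "\<dots> = y ((b - 1) * ?D + c)"
  proof -
    have "(b - 1) * ?D + c < (b - 1) * ?D + ?D" using c by simp
    also have "\<dots> = b * ?D" using bD by simp
    also have "\<dots> \<le> p * ?D" using b by simp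
    finally show ?thesis by (simp add: sum_delta_nat)
  qed
  finally show ?thesis .
qed

lemma delta_shift_lo:
  fixes y :: "nat \<Rightarrow> 'a::comm_ring_1"
  assumes p: "p \<ge> 2" and c: "c < deg p (Suc t)"
  shows "(\<Sum>j<p * deg p (Suc t). of_int (delta_entry p (Suc (Suc t)) c j) * y j)
     = (\<Sum>c'<deg p (Suc t). of_int (delta_entry p (Suc t) c c') * y ((p - 1) * deg p (Suc t) + c'))"
proof -
  let ?D = "deg p (Suc t)"
  have D: "?D > 0" using p by (simp add: deg_pos)
  have pD: "p * ?D = (p - 1) * ?D + ?D" using p by (cases p) auto
  have E: "of_int (delta_entry p (Suc (Suc t)) c j) * y j =
     (if (p - 1) * ?D \<le> j \<and> j < (p - 1) * ?D + ?D then of_int (delta_entry p (Suc t) c (j - (p - 1) * ?D)) * y ((p - 1) * ?D + (j - (p - 1) * ?D)) else 0)"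
    if j: "j < p * ?D" for j
  proof (cases "(p - 1) * ?D \<le> j")
    case True
    have "j div ?D = p - 1" using True j pD D by (subst div_eq_iff_nat) auto
    moreover have "j mod ?D = j - (p - 1) * ?D" using True j pD D by (subst mod_eq_when[of _ "p - 1"]) auto
    ultimately show ?thesis using True j pD c p by (simp add: Let_def)
  next
    case False
    have "j div ?D < p - 1" using False D by (simp add: div_less_iff_less_mult)
    then have "j div ?D + 1 < p" by simp
    then show ?thesis using False c by (simp add: Let_def)
  qed
  have "(\<Sum>j<p * ?D. of_int (delta_entry p (Suc (Suc t)) c j) * y j)
     = (\<Sum>j<p * ?D. (if (p - 1) * ?D \<le> j \<and> j < (p - 1) * ?D + ?D then of_int (delta_entry p (Suc t) c (j - (p - 1) * ?D)) * y ((p - 1) * ?D + (j - (p - 1) * ?D)) else 0))"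
    by (intro sum.cong refl) (auto simp del: delta_entry.simps simp add: E)
  also have "\<dots> = (\<Sum>c'<?D. of_int (delta_entry p (Suc t) c c') * y ((p - 1) * ?D + c'))"
    by (rule sum_interval) (simp add: pD)
  finally show ?thesis .
qed

context L begin

definition AF :: "'a::comm_ring_1 mat" where "AF = map_mat of_int AM"

lemma AF_carrier: "AF \<in> carrier_mat NN NN"
  using AM_carrier unfolding AF_def by simp

lemma AF_dims[simp]: "dim_row (AF::'a::comm_ring_1 mat) = NN" "dim_col (AF::'a::comm_ring_1 mat) = NN"
  using AM_carrier unfolding AF_def by auto

lemma AF_mv: fixes x :: "'a::comm_ring_1 vec" assumes x: "x \<in> carrier_vec NN" and i: "i < NN"
  shows "(AF *\<^sub>v x) $ i = (\<Sum>j<NN. of_int (AM $$ (i,j)) * x $ j)"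
proof -
  have "(AF *\<^sub>v x) $ i = row AF i \<bullet> x" using i by simp
  also have "\<dots> = (\<Sum>j\<in>{0..<NN}. row AF i $ j * x $ j)" using x by (simp add: scalar_prod_def)
  also have "\<dots> = (\<Sum>j<NN. of_int (AM $$ (i,j)) * x $ j)"
    using AF_carrier AM_carrier i by (intro sum.cong) (auto simp: AF_def lessThan_atLeast0)
  finally show ?thesis .
qed

definition Rx :: "'a::comm_ring_1 vec \<Rightarrow> 'a" where
  "Rx x = x $ (oa + d2 - 1) + x $ (ob + ds - 1) + (if 2 \<le> n then x $ (ob + ds + ds - 1) else 0)"

lemma idx_facts: "oa + d2 - 1 < NN" "ob + ds - 1 < NN" "(ob + ds + ds - 1 < NN) = (2 \<le> n)" "0 < NN"
proof -
  have "d2 \<le> n*d2" using n1 by simp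
  then have "oa + d2 - 1 < oa + n*d2" using d2_pos by linarith
  then show "oa + d2 - 1 < NN" unfolding NN_def ob_def by simp
  have "ds \<le> n*ds" using n1 by simp
  then show "ob + ds - 1 < NN" using ds_pos unfolding NN_def by linarith
  then show "0 < NN" by simp
  show "(ob + ds + ds - 1 < NN) = (2 \<le> n)"
  proof
    assume "ob + ds + ds - 1 < NN"
    then have "ds + ds - 1 < n*ds" unfolding NN_def using ds_pos by simp
    then have "ds + ds \<le> n * ds" by simp
    then have "2 * ds \<le> n * ds" by (simp add: mult_2)
    then show "2 \<le> n" using ds_pos by (meson mult_le_cancel2)
  next
    assume "2 \<le> n"
    then have "2 * ds \<le> n * ds" by simp
    then show "ob + ds + ds - 1 < NN" unfolding NN_def using ds_pos by linarith
  qed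
qed

lemma V0: assumes x: "x \<in> carrier_vec NN"
  shows "(AF *\<^sub>v x) $ 0 = x $ 0 + Rx x"
proof -
  have "(AF *\<^sub>v x) $ 0 = (\<Sum>j<NN. of_int (AM $$ (0,j)) * x $ j)" using AF_mv[OF x] idx_facts by simp
  also have "\<dots> = (\<Sum>j<NN. of_bool (j = 0) * x $ j + of_bool (j = oa + d2 - 1) * x $ j
     + of_bool (j = ob + ds - 1) * x $ j + of_bool (j = ob + ds + ds - 1) * x $ j)"
    by (intro sum.cong refl) (simp add: R0 distrib_right)
  also have "\<dots> = x $ 0 + Rx x"
    unfolding sum.distrib sum_delta_nat Rx_def using idx_facts by simp
  finally show ?thesis .
qed

lemma V1: assumes x: "x \<in> carrier_vec NN" and r: "r < p - 1"
  shows "(AF *\<^sub>v x) $ (n + r) = (\<Sum>c<p - 1. of_int (delta_entry p 1 r c) * x $ (n + c)) + (if r = 0 then Rx x else 0)"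
proof -
  have i: "n + r < NN" using r oa_ge NN_eq by simp
  have "(AF *\<^sub>v x) $ (n + r) = (\<Sum>j<NN. of_int (AM $$ (n + r,j)) * x $ j)" using AF_mv[OF x i] by simp
  also have "\<dots> = (\<Sum>j<NN. (if n \<le> j \<and> j < n + (p - 1) then of_int (delta_entry p 1 r (j - n)) * x $ (n + (j - n)) else 0)
     + of_bool (r = 0) * (of_bool (j = oa + d2 - 1) * x $ j
     + of_bool (j = ob + ds - 1) * x $ j + of_bool (j = ob + ds + ds - 1) * x $ j))"
  proof (intro sum.cong refl)
    fix j assume "j \<in> {..<NN}"
    then have j: "j < NN" by simp
    show "of_int (AM $$ (n + r,j)) * x $ j = (if n \<le> j \<and> j < n + (p - 1) then of_int (delta_entry p 1 r (j - n)) * x $ (n + (j - n)) else 0)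
     + of_bool (r = 0) * (of_bool (j = oa + d2 - 1) * x $ j
     + of_bool (j = ob + ds - 1) * x $ j + of_bool (j = ob + ds + ds - 1) * x $ j)"
    proof (cases "n \<le> j \<and> j < n + (p - 1)")
      case True
      have "j < oa" using True oa_ge by simp
      then have neq: "j \<noteq> oa + d2 - 1" "j \<noteq> ob + ds - 1" "j \<noteq> ob + ds + ds - 1"
        using oa_ob d2_pos ds_pos by auto
      have e: "AM $$ (n + r, j) = delta_entry p 1 r (j - n)"
        using R1[OF r j] True neq by (simp del: delta_entry.simps)
      show ?thesis using True neq by (simp del: delta_entry.simps add: e)
    next
      case False
      have z: "(if n \<le> j \<and> j < n + (p - 1) then delta_entry p 1 r (j - n) else 0) = (0::int)"
        using False by (rule if_not_P)
      have e: "AM $$ (n + r, j) = of_bool (r = 0) * (of_bool (j = oa + d2 - 1) + of_bool (j = ob + ds - 1)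
        + of_bool (j = ob + ds + ds - 1))"
        by (simp only: R1[OF r j] z add_0_left)
      show ?thesis unfolding if_not_P[OF False] e by (simp add: ring_distribs)
    qed
  qed
  also have "\<dots> = (\<Sum>c<p - 1. of_int (delta_entry p 1 r c) * x $ (n + c)) + (if r = 0 then Rx x else 0)"
  proof -
    have "n + (p - 1) \<le> NN" using oa_ge NN_eq by simp
    then have S1: "(\<Sum>j<NN. (if n \<le> j \<and> j < n + (p - 1) then of_int (delta_entry p 1 r (j - n)) * x $ (n + (j - n)) else 0))
       = (\<Sum>c<p - 1. of_int (delta_entry p 1 r c) * x $ (n + c))"
      by (rule sum_interval)
    have S2: "(\<Sum>j<NN. of_bool (r = 0) * (of_bool (j = oa + d2 - 1) * x $ j
     + of_bool (j = ob + ds - 1) * x $ j + of_bool (j = ob + ds + ds - 1) * x $ j))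
      = (if r = 0 then Rx x else 0)"
      unfolding sum_distrib_left[symmetric] sum.distrib sum_delta_nat Rx_def
      using idx_facts by simp
    show ?thesis unfolding sum.distrib S1 S2 ..
  qed
  finally show ?thesis .
qed

lemma V2: assumes x: "x \<in> carrier_vec NN" and r: "r < d2"
  shows "(AF *\<^sub>v x) $ (oa + r) = (\<Sum>c<d2. of_int (delta_entry p 2 r c) * x $ (oa + c))"
proof -
  have dn: "d2 \<le> n * d2" using n1 by simp
  have rr: "r < n*d2" using r dn by (rule less_le_trans)
  have i: "oa + r < NN" using rr NN_eq by simp
  have "(AF *\<^sub>v x) $ (oa + r) = (\<Sum>j<NN. of_int (AM $$ (oa + r,j)) * x $ j)" using AF_mv[OF x i] by simp
  also have "\<dots> = (\<Sum>j<NN. (if oa \<le> j \<and> j < oa + d2 then of_int (delta_entry p 2 r (j - oa)) * x $ (oa + (j - oa)) else 0))"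
    using rr by (intro sum.cong refl) (simp del: delta_entry.simps add: R2[OF r])
  also have "\<dots> = (\<Sum>c<d2. of_int (delta_entry p 2 r c) * x $ (oa + c))"
  proof -
    have "oa + d2 \<le> NN" using dn NN_eq by linarith
    then show ?thesis by (rule sum_interval)
  qed
  finally show ?thesis .
qed

lemma Vs: assumes x: "x \<in> carrier_vec NN" and q: "q < n" and r: "r < ds"
  shows "(AF *\<^sub>v x) $ (ob + q*ds + r) = (\<Sum>c<ds. of_int (delta_entry p s r c) * x $ (ob + q*ds + c))"
proof -
  have qd: "q*ds + ds \<le> n*ds" using q by (metis Suc_leI add.commute mult_Suc mult_le_mono1)
  have i: "ob + q*ds + r < NN" using r qd unfolding NN_def by simp
  have "(AF *\<^sub>v x) $ (ob + q*ds + r) = (\<Sum>j<NN. of_int (AM $$ (ob + q*ds + r,j)) * x $ j)" using AF_mv[OF x i] by simp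
  also have "\<dots> = (\<Sum>j<NN. (if ob + q*ds \<le> j \<and> j < ob + q*ds + ds then of_int (delta_entry p s r (j - (ob + q*ds))) * x $ (ob + q*ds + (j - (ob + q*ds))) else 0))"
    by (intro sum.cong refl) (simp del: delta_entry.simps add: Rs[OF q r])
  also have "\<dots> = (\<Sum>c<ds. of_int (delta_entry p s r c) * x $ (ob + q*ds + c))"
    by (rule sum_interval) (use qd in \<open>simp add: NN_def\<close>)
  finally show ?thesis .
qed

lemma VC: "(AF :: 'a::comm_ring_1 mat) *\<^sub>v unit_vec NN 0 = unit_vec NN 0"
proof
  show "dim_vec ((AF :: 'a mat) *\<^sub>v unit_vec NN 0) = dim_vec (unit_vec NN 0 :: 'a vec)" by simp
next
  fix i assume "i < dim_vec (unit_vec NN 0 :: 'a vec)"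
  then have i: "i < NN" by simp
  have "((AF :: 'a mat) *\<^sub>v unit_vec NN 0) $ i = (\<Sum>j<NN. of_int (AM $$ (i,j)) * (unit_vec NN 0 :: 'a vec) $ j)"
    by (rule AF_mv[OF unit_vec_carrier i])
  also have "\<dots> = (\<Sum>j<NN. of_bool (j = 0) * of_int (AM $$ (i,j)))"
    by (intro sum.cong refl) auto
  also have "\<dots> = of_int (AM $$ (i,0))" using idx_facts by (simp add: sum_delta_nat)
  also have "\<dots> = (unit_vec NN 0 :: 'a vec) $ i" using C0[OF i] i idx_facts by simp
  finally show "((AF :: 'a mat) *\<^sub>v unit_vec NN 0) $ i = (unit_vec NN 0 :: 'a vec) $ i" .
qed

end

lemma colsum:
  assumes p: "p \<ge> 2" and t: "t \<ge> 1" and j: "j < deg p t"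
  shows "(\<Sum>i<deg p t. delta_entry p t i j) = 1 - int p * of_bool (j = deg p t - 1)"
  using t j
proof (induct t arbitrary: j rule: nat_induct_at_least)
  case base
  have jp: "j < p - 1" using base by simp
  show ?case
  proof (cases "j + 2 < p")
    case True
    have "(\<Sum>i<p - 1. delta_entry p 1 i j) = (\<Sum>i<p - 1. of_bool (i = j + 1) * 1)"
      using True by (intro sum.cong refl) simp
    also have "\<dots> = 1" using True by (subst sum_delta_nat) simp
    finally show ?thesis using True by simp
  next
    case False
    then have jv: "j = p - 2" using jp by simp
    have "(\<Sum>i<p - 1. delta_entry p 1 i j) = (\<Sum>i<p - 1. -1)"
      using False by (intro sum.cong refl) simp
    also have "\<dots> = 1 - int p" using p by (simp add: of_nat_diff)
    finally show ?thesis using jv p by simp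
  qed
next
  case (Suc t)
  obtain t' where tt: "t = Suc t'" using Suc(1) by (cases t) auto
  let ?D = "deg p t"
  have D: "?D > 0" using p by (simp add: deg_pos)
  have dS: "deg p (Suc t) = p * ?D" using Suc(1) by (simp add: degSuc)
  have jl: "j < p * ?D" using Suc(3) dS by simp
  have dE: "delta_entry p (Suc t) i j = (if j div ?D + 1 < p then of_bool (i = j + ?D)
     else if i < ?D then delta_entry p t i (j mod ?D) else 0)" for i
    using tt by (simp add: Let_def)
  show ?case
  proof (cases "j div ?D + 1 < p")
    case True
    have "j div ?D < p - 1" using True by simp
    then have "j < (p - 1) * ?D" using D by (simp add: div_less_iff_less_mult)
    moreover have "p * ?D = (p - 1) * ?D + ?D" using p by (cases p) auto
    ultimately have jD: "j + ?D < p * ?D" by linarith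
    have "(\<Sum>i<deg p (Suc t). delta_entry p (Suc t) i j) = (\<Sum>i<p * ?D. of_bool (i = j + ?D) * 1)"
      unfolding dS by (intro sum.cong refl) (simp only: dE if_P[OF True] mult_1_right)
    also have "\<dots> = 1" using jD by (subst sum_delta_nat) simp
    moreover have "j \<noteq> deg p (Suc t) - 1" using jD dS D by linarith
    ultimately show ?thesis by simp
  next
    case False
    have "j div ?D < p" using jl D by (simp add: div_less_iff_less_mult)
    then have jdiv: "j div ?D = p - 1" using False by simp
    have "(\<Sum>i<deg p (Suc t). delta_entry p (Suc t) i j)
        = (\<Sum>i<p * ?D. if 0 \<le> i \<and> i < 0 + ?D then delta_entry p t (i - 0) (j mod ?D) else 0)"
      unfolding dS by (intro sum.cong refl) (simp only: dE if_not_P[OF False] minus_nat.diff_0 add_0 le0 simp_thms)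
    also have "\<dots> = (\<Sum>i<?D. delta_entry p t i (j mod ?D))"
      by (rule sum_interval) (use p in \<open>cases p; simp\<close>)
    also have "\<dots> = 1 - int p * of_bool (j mod ?D = ?D - 1)"
      using Suc(2) D by simp
    also have "(j mod ?D = ?D - 1) = (j = deg p (Suc t) - 1)"
    proof -
      have "j = (j div ?D) * ?D + j mod ?D" by (rule div_mult_mod_eq[symmetric])
      then have "j = (p - 1) * ?D + j mod ?D" using jdiv by simp
      moreover have "p * ?D = (p - 1) * ?D + ?D" using p by (cases p) auto
      moreover have "j mod ?D < ?D" using D by simp
      ultimately show ?thesis unfolding dS by linarith
    qed
    finally show ?thesis .
  qed
qed


context L begin

lemma s_facts: "Suc (Suc (s - 2)) = s" "deg p (Suc (s - 2)) = DD" "Suc (s - 2) = s - 1" "p * DD = ds"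
  "Suc (s - 1) = s" "deg p (s - 1) = DD"
  using s3 ds_DD by (auto simp: DD_def numeral_2_eq_2 Suc_diff_Suc)

definition usum :: "nat \<Rightarrow> nat \<Rightarrow> 'a::comm_ring_1 vec \<Rightarrow> 'a" where
  "usum q k x = (\<Sum>r<DD. x $ (ob + q*ds + k*DD + r))"

lemma usum_hi: assumes x: "x \<in> carrier_vec NN" and q: "q < n" and k: "1 \<le> k" "k < p"
  shows "usum q k (AF *\<^sub>v x) = usum q (k - 1) x"
proof -
  let ?y = "\<lambda>c. x $ (ob + q*ds + c)"
  have "usum q k (AF *\<^sub>v x) = (\<Sum>r<DD. (AF *\<^sub>v x) $ (ob + q*ds + (k*DD + r)))"
    unfolding usum_def by (simp add: add.assoc)
  also have "\<dots> = (\<Sum>r<DD. (\<Sum>c<ds. of_int (delta_entry p s (k*DD + r) c) * ?y c))"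
  proof (intro sum.cong refl)
    fix r assume "r \<in> {..<DD}"
    then have r: "r < DD" by simp
    have "k*DD + r < k*DD + DD" using r by simp
    also have "\<dots> = Suc k * DD" by simp
    also have "\<dots> \<le> p * DD" using k by (intro mult_le_mono1) simp
    finally have "k*DD + r < ds" using ds_DD by simp
    then show "(AF *\<^sub>v x) $ (ob + q*ds + (k*DD + r)) = (\<Sum>c<ds. of_int (delta_entry p s (k*DD + r) c) * ?y c)"
      using Vs[OF x q] by simp
  qed
  also have "\<dots> = (\<Sum>r<DD. ?y ((k - 1)*DD + r))"
  proof (intro sum.cong refl)
    fix r assume "r \<in> {..<DD}"
    then have r: "r < deg p (Suc (s - 2))" using s_facts by simp
    note H = delta_shift_hi[OF p2 k r, of ?y]
    show "(\<Sum>c<ds. of_int (delta_entry p s (k*DD + r) c) * ?y c) = ?y ((k - 1)*DD + r)"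
      using H unfolding s_facts .
  qed
  also have "\<dots> = usum q (k - 1) x" unfolding usum_def by (simp add: add.assoc)
  finally show ?thesis .
qed

lemma usum_lo: assumes x: "x \<in> carrier_vec NN" and q: "q < n"
  shows "usum q 0 (AF *\<^sub>v x) = usum q (p - 1) x - of_nat p * x $ (ob + q*ds + ds - 1)"
proof -
  let ?y = "\<lambda>c. x $ (ob + q*ds + c)"
  have DDds: "DD \<le> ds" using ds_DD p2 by simp
  have pD: "(p - 1) * DD + DD = ds" using ds_DD p2 by (cases p) auto
  have "usum q 0 (AF *\<^sub>v x) = (\<Sum>r<DD. (AF *\<^sub>v x) $ (ob + q*ds + r))"
    unfolding usum_def by simp
  also have "\<dots> = (\<Sum>r<DD. (\<Sum>c<ds. of_int (delta_entry p s r c) * ?y c))"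
    using Vs[OF x q] DDds by (intro sum.cong refl) simp
  also have "\<dots> = (\<Sum>r<DD. (\<Sum>c'<DD. of_int (delta_entry p (s - 1) r c') * ?y ((p - 1)*DD + c')))"
  proof (rule sum.cong[OF refl])
    fix r assume "r \<in> {..<DD}"
    then have r: "r < deg p (Suc (s - 2))" using s_facts by simp
    note H = delta_shift_lo[OF p2 r, of ?y]
    show "(\<Sum>c<ds. of_int (delta_entry p s r c) * ?y c) = (\<Sum>c'<DD. of_int (delta_entry p (s - 1) r c') * ?y ((p - 1)*DD + c'))"
      using H by (simp only: s_facts)
  qed
  also have "\<dots> = (\<Sum>c'<DD. of_int (\<Sum>r<DD. delta_entry p (s - 1) r c') * ?y ((p - 1)*DD + c'))"
    by (simp add: sum_distrib_right of_int_sum) (rule sum.swap)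
  also have "\<dots> = (\<Sum>c'<DD. (1 - of_nat p * of_bool (c' = DD - 1)) * ?y ((p - 1)*DD + c'))"
  proof (intro sum.cong refl)
    fix c' assume "c' \<in> {..<DD}"
    then have c': "c' < deg p (s - 1)" by (simp add: DD_def)
    have "s - 1 \<ge> 1" using s3 by simp
    from colsum[OF p2 this c'] show "of_int (\<Sum>r<DD. delta_entry p (s - 1) r c') * ?y ((p - 1)*DD + c')
      = (1 - of_nat p * of_bool (c' = DD - 1)) * ?y ((p - 1)*DD + c')"
      by (simp add: DD_def)
  qed
  also have "\<dots> = (\<Sum>c'<DD. ?y ((p - 1)*DD + c')) - of_nat p * (\<Sum>c'<DD. of_bool (c' = DD - 1) * ?y ((p - 1)*DD + c'))"
  proof -
    have e: "(1 - of_nat p * of_bool (c' = DD - 1)) * ?y ((p - 1)*DD + c')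
       = ?y ((p - 1)*DD + c') - of_nat p * (of_bool (c' = DD - 1) * ?y ((p - 1)*DD + c'))" for c'
      by (simp add: ring_distribs)
    show ?thesis unfolding e sum_subtractf sum_distrib_left ..
  qed
  also have "\<dots> = usum q (p - 1) x - of_nat p * x $ (ob + q*ds + ds - 1)"
  proof -
    have "(\<Sum>c'<DD. of_bool (c' = DD - 1) * ?y ((p - 1)*DD + c')) = ?y ((p - 1)*DD + (DD - 1))"
      using DD_pos by (subst sum_delta_nat) simp
    also have "\<dots> = x $ (ob + q*ds + ds - 1)"
    proof -
      have "ob + q*ds + ((p - 1)*DD + (DD - 1)) = ob + q*ds + ds - 1" using pD DD_pos by linarith
      then show ?thesis by simp
    qed
    finally show ?thesis unfolding usum_def by (simp add: add.assoc)
  qed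
  finally show ?thesis .
qed

end

context L begin

definition wt :: "nat \<Rightarrow> nat \<Rightarrow> int" where
  "wt j r = 1 - int p * of_bool (r + j = p - 1)"

lemma wt_delta: assumes j: "j \<le> p - 1" and c: "c < p - 1"
  shows "(\<Sum>r<p - 1. wt j r * delta_entry p 1 r c) = wt (Suc j) c"
proof (cases "c + 2 < p")
  case True
  have "(\<Sum>r<p - 1. wt j r * delta_entry p 1 r c) = (\<Sum>r<p - 1. of_bool (r = c + 1) * wt j r)"
    using True by (intro sum.cong refl) simp
  also have "\<dots> = wt j (c + 1)" using True by (subst sum_delta_nat) simp
  also have "\<dots> = wt (Suc j) c" unfolding wt_def by simp
  finally show ?thesis .
next
  case False
  then have cv: "c = p - 2" using c by simp
  have "(\<Sum>r<p - 1. wt j r * delta_entry p 1 r c) = (\<Sum>r<p - 1. int p * of_bool (r = p - 1 - j) * 1 - 1)"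
  proof (intro sum.cong refl)
    fix r assume "r \<in> {..<p - 1}"
    have "(r + j = p - 1) = (r = p - 1 - j)" using j by auto
    then show "wt j r * delta_entry p 1 r c = int p * of_bool (r = p - 1 - j) * 1 - 1"
      using False unfolding wt_def by simp
  qed
  also have "\<dots> = int p * (\<Sum>r<p - 1. of_bool (r = p - 1 - j) * 1) - int (p - 1)"
    by (simp add: sum_subtractf sum_distrib_left)
  also have "\<dots> = int p * of_bool (1 \<le> j) - int (p - 1)"
    using p2 by (subst sum_delta_nat) auto
  also have "\<dots> = wt (Suc j) c"
    unfolding wt_def cv using p2 by (cases j) (auto simp: of_nat_diff)
  finally show ?thesis .
qed

lemma K1_step: assumes x: "x \<in> carrier_vec NN" and j: "j \<le> p - 1"
  shows "(\<Sum>r<p - 1. of_int (wt j r) * (AF *\<^sub>v x) $ (n + r))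
    = (\<Sum>c<p - 1. of_int (wt (Suc j) c) * x $ (n + c)) + of_int (wt j 0) * Rx x"
proof -
  have "(\<Sum>r<p - 1. of_int (wt j r) * (AF *\<^sub>v x) $ (n + r))
     = (\<Sum>r<p - 1. of_int (wt j r) * ((\<Sum>c<p - 1. of_int (delta_entry p 1 r c) * x $ (n + c)) + of_bool (r = 0) * Rx x))"
    using V1[OF x] by (intro sum.cong refl) simp
  also have "\<dots> = (\<Sum>r<p - 1. \<Sum>c<p - 1. of_int (wt j r) * (of_int (delta_entry p 1 r c) * x $ (n + c)))
     + (\<Sum>r<p - 1. of_int (wt j r) * (of_bool (r = 0) * Rx x))"
    unfolding distrib_left sum.distrib sum_distrib_left ..
  also have "(\<Sum>r<p - 1. of_int (wt j r) * (of_bool (r = 0) * Rx x)) = of_int (wt j 0) * Rx x"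
  proof -
    have "(\<Sum>r<p - 1. of_int (wt j r) * (of_bool (r = 0) * Rx x)) = (\<Sum>r<p - 1. of_bool (r = 0) * (of_int (wt j r) * Rx x))"
      by (intro sum.cong refl) (rule mult.left_commute)
    also have "\<dots> = of_int (wt j 0) * Rx x" using p2 by (subst sum_delta_nat) simp
    finally show ?thesis .
  qed
  also have "(\<Sum>r<p - 1. \<Sum>c<p - 1. of_int (wt j r) * (of_int (delta_entry p 1 r c) * x $ (n + c)))
      = (\<Sum>c<p - 1. of_int (\<Sum>r<p - 1. wt j r * delta_entry p 1 r c) * x $ (n + c))"
    by (subst sum.swap) (simp add: sum_distrib_right of_int_sum mult.assoc)
  also have "\<dots> = (\<Sum>c<p - 1. of_int (wt (Suc j) c) * x $ (n + c))"
  proof (intro sum.cong refl)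
    fix c assume "c \<in> {..<p - 1}"
    then have c: "c < p - 1" by simp
    show "of_int (\<Sum>r<p - 1. wt j r * delta_entry p 1 r c) * x $ (n + c) = of_int (wt (Suc j) c) * x $ (n + c)"
      by (simp only: wt_delta[OF j c])
  qed
  finally show ?thesis .
qed

definition Lf :: "nat \<Rightarrow> 'a::comm_ring_1 vec \<Rightarrow> 'a" where
  "Lf j x = x $ 0 - (\<Sum>r<p - 1. of_int (wt j r) * x $ (n + r)) + usum 0 (p - 1 - j) x
     + (if 2 \<le> n then usum 1 (p - 1 - j) x else 0)"

definition Gf :: "'a::comm_ring_1 vec \<Rightarrow> 'a" where
  "Gf x = x $ (oa + d2 - 1)"

lemma LfA: assumes x: "x \<in> carrier_vec NN" and j: "j < p - 1"
  shows "Lf j (AF *\<^sub>v x) = Lf (Suc j) x"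
proof -
  have w0: "wt j 0 = 1" using j unfolding wt_def by simp
  have k: "1 \<le> p - 1 - j" "p - 1 - j < p" using j by auto
  have km: "p - 1 - j - 1 = p - 1 - Suc j" by simp
  have U0: "usum 0 (p - 1 - j) (AF *\<^sub>v x) = usum 0 (p - 1 - Suc j) x"
    using usum_hi[OF x _ k] n1 km by simp
  have U1: "2 \<le> n \<Longrightarrow> usum 1 (p - 1 - j) (AF *\<^sub>v x) = usum 1 (p - 1 - Suc j) x"
    using usum_hi[OF x _ k] km by simp
  have jle: "j \<le> p - 1" using j by simp
  show ?thesis unfolding Lf_def V0[OF x] K1_step[OF x jle] w0 U0 using U1 j
    by (cases "2 \<le> n") simp_all
qed

lemma LfB: assumes x: "x \<in> carrier_vec NN"
  shows "Lf (p - 1) (AF *\<^sub>v x) = Lf 0 x + of_nat p * Gf x"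
proof -
  have w0: "wt (p - 1) 0 = 1 - int p" unfolding wt_def by simp
  have wS: "(\<Sum>c<p - 1. of_int (wt (Suc (p - 1)) c) * x $ (n + c)) = (\<Sum>c<p - 1. of_int (wt 0 c) * x $ (n + c))"
    using p2 by (intro sum.cong refl) (auto simp: wt_def)
  have K: "(\<Sum>r<p - 1. of_int (wt (p - 1) r) * (AF *\<^sub>v x) $ (n + r))
    = (\<Sum>c<p - 1. of_int (wt 0 c) * x $ (n + c)) + (1 - of_nat p) * Rx x"
    unfolding K1_step[OF x le_refl] w0 wS by simp
  have U0: "usum 0 0 (AF *\<^sub>v x) = usum 0 (p - 1) x - of_nat p * x $ (ob + ds - 1)"
    using usum_lo[OF x] n1 by simp
  have U1: "2 \<le> n \<Longrightarrow> usum 1 0 (AF *\<^sub>v x) = usum 1 (p - 1) x - of_nat p * x $ (ob + ds + ds - 1)"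
    using usum_lo[OF x, of 1] by (simp add: add.assoc)
  show ?thesis
  proof (cases "2 \<le> n")
    case True
    show ?thesis unfolding Lf_def diff_self_eq_0 V0[OF x] K Gf_def U0 U1[OF True] diff_zero
      using True by (simp add: Rx_def algebra_simps)
  next
    case False
    show ?thesis unfolding Lf_def diff_self_eq_0 V0[OF x] K Gf_def U0 diff_zero
      using False by (simp add: Rx_def algebra_simps)
  qed
qed

end

context L begin

lemma AF_mult_assoc: assumes x: "x \<in> carrier_vec NN"
  shows "((AF::'a::comm_ring_1 mat) ^\<^sub>m a * AF ^\<^sub>m b) *\<^sub>v x = AF ^\<^sub>m a *\<^sub>v (AF ^\<^sub>m b *\<^sub>v x)"
  by (rule assoc_mult_mat_vec[OF pow_carrier_mat[OF AF_carrier] pow_carrier_mat[OF AF_carrier] x])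

lemma AF_pow_carrier: "(AF::'a::comm_ring_1 mat) ^\<^sub>m k *\<^sub>v x \<in> carrier_vec NN"
  unfolding carrier_vec_def by simp

lemma AF_pow_Suc: assumes x: "x \<in> carrier_vec NN"
  shows "(AF::'a::comm_ring_1 mat) ^\<^sub>m Suc k *\<^sub>v x = AF ^\<^sub>m k *\<^sub>v (AF *\<^sub>v x)"
proof -
  have "(AF::'a mat) ^\<^sub>m Suc k = AF ^\<^sub>m k * AF" by simp
  then show ?thesis using assoc_mult_mat_vec[OF pow_carrier_mat[OF AF_carrier] AF_carrier x, of k] by simp
qed

lemma Lf_iter: assumes x: "x \<in> carrier_vec NN" and ik: "i + k \<le> p - 1"
  shows "Lf i ((AF::'a::comm_ring_1 mat) ^\<^sub>m k *\<^sub>v x) = Lf (i + k) x"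
  using x ik
proof (induct k arbitrary: x)
  case 0
  then show ?case by simp
next
  case (Suc k)
  have Ax: "(AF::'a mat) *\<^sub>v x \<in> carrier_vec NN" unfolding carrier_vec_def by simp
  have "Lf i ((AF::'a mat) ^\<^sub>m Suc k *\<^sub>v x) = Lf i (AF ^\<^sub>m k *\<^sub>v (AF *\<^sub>v x))"
    using AF_pow_Suc[OF Suc(2)] by simp
  also have "\<dots> = Lf (i + k) ((AF::'a mat) *\<^sub>v x)" using Suc(1)[OF Ax] Suc(3) by simp
  also have "\<dots> = Lf (Suc (i + k)) x" using LfA[OF Suc(2)] Suc(3) by simp
  finally show ?case by simp
qed

lemma Lf_p: assumes x: "x \<in> carrier_vec NN"
  shows "Lf 0 ((AF::'a::comm_ring_1 mat) ^\<^sub>m p *\<^sub>v x) = Lf 0 x + of_nat p * Gf x"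
proof -
  have Ax: "(AF::'a mat) *\<^sub>v x \<in> carrier_vec NN" unfolding carrier_vec_def by simp
  have pp: "p = Suc (p - 1)" using p2 by simp
  have "Lf 0 ((AF::'a mat) ^\<^sub>m p *\<^sub>v x) = Lf 0 (AF ^\<^sub>m (p - 1) *\<^sub>v (AF *\<^sub>v x))"
    using AF_pow_Suc[OF x, of "p - 1"] pp by simp
  also have "\<dots> = Lf (p - 1) ((AF::'a mat) *\<^sub>v x)" using Lf_iter[OF Ax, of 0 "p - 1"] by simp
  also have "\<dots> = Lf 0 x + of_nat p * Gf x" by (rule LfB[OF x])
  finally show ?thesis .
qed

lemma Lf_pl: assumes x: "x \<in> carrier_vec NN"
  shows "Lf 0 ((AF::'a::comm_ring_1 mat) ^\<^sub>m (p * l) *\<^sub>v x) = Lf 0 x + of_nat p * (\<Sum>i<l. Gf (AF ^\<^sub>m (p * i) *\<^sub>v x))"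
proof (induct l)
  case 0 then show ?case using x by simp
next
  case (Suc l)
  have "(AF::'a mat) ^\<^sub>m (p * Suc l) *\<^sub>v x = AF ^\<^sub>m p *\<^sub>v (AF ^\<^sub>m (p * l) *\<^sub>v x)"
  proof -
    have "(AF::'a mat) ^\<^sub>m (p * Suc l) = AF ^\<^sub>m p * AF ^\<^sub>m (p * l)"
      using pow_mat_add[OF AF_carrier, of p "p * l"] by simp
    then show ?thesis using AF_mult_assoc[OF x] by simp
  qed
  then have "Lf 0 ((AF::'a mat) ^\<^sub>m (p * Suc l) *\<^sub>v x) = Lf 0 (AF ^\<^sub>m (p * l) *\<^sub>v x) + of_nat p * Gf (AF ^\<^sub>m (p * l) *\<^sub>v x)"
    using Lf_p[OF AF_pow_carrier] by simp
  then show ?case using Suc by (simp add: algebra_simps)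
qed

end

lemma sum_ind: fixes N u t :: nat shows "(\<Sum>r<N. (of_bool (u + r = t) :: int)) = of_bool (u \<le> t \<and> t - u < N)"
proof (cases "u \<le> t")
  case True
  have "(\<Sum>r<N. (of_bool (u + r = t) :: int)) = (\<Sum>r<N. of_bool (r = t - u) * 1)"
    using True by (intro sum.cong refl) auto
  also have "\<dots> = of_bool (t - u < N)" by (subst sum_delta_nat) simp
  finally show ?thesis using True by simp
next
  case False
  then show ?thesis by simp
qed

context L begin

definition Bf :: "nat \<Rightarrow> (nat \<Rightarrow> int) \<Rightarrow> 'a::comm_ring_1 vec \<Rightarrow> 'a" where
  "Bf b \<rho> x = (\<Sum>c<p - 1. of_int (\<rho> c) * x $ (oa + b * (p - 1) + c))"

lemma two_facts: "Suc (Suc 0) = (2::nat)" "deg p (Suc 0) = p - 1" "p * (p - 1) = d2"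
  by (auto simp: d2_eq)

lemma Bf_cong: "(\<And>c. c < p - 1 \<Longrightarrow> \<rho> c = \<rho>' c) \<Longrightarrow> Bf b \<rho> x = Bf b \<rho>' x"
  unfolding Bf_def by (intro sum.cong refl) auto

lemma B_hi: assumes x: "x \<in> carrier_vec NN" and b: "1 \<le> b" "b < p"
  shows "Bf b \<rho> (AF *\<^sub>v x) = Bf (b - 1) \<rho> x"
  unfolding Bf_def
proof (intro sum.cong refl)
  fix c assume "c \<in> {..<p - 1}"
  then have c: "c < p - 1" by simp
  have "b * (p - 1) + c < b * (p - 1) + (p - 1)" using c by simp
  also have "\<dots> = Suc b * (p - 1)" by simp
  also have "\<dots> \<le> p * (p - 1)" using b by (intro mult_le_mono1) simp
  finally have r: "b * (p - 1) + c < d2" by (simp add: d2_eq)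
  have "(AF *\<^sub>v x) $ (oa + b * (p - 1) + c) = (\<Sum>c'<d2. of_int (delta_entry p 2 (b * (p - 1) + c) c') * x $ (oa + c'))"
    using V2[OF x r] by (simp add: add.assoc)
  also have "\<dots> = x $ (oa + ((b - 1) * (p - 1) + c))"
    using delta_shift_hi[OF p2 b, of c 0 "\<lambda>c'. x $ (oa + c')"] c unfolding two_facts by simp
  finally show "of_int (\<rho> c) * (AF *\<^sub>v x) $ (oa + b * (p - 1) + c) = of_int (\<rho> c) * x $ (oa + (b - 1) * (p - 1) + c)"
    by (simp add: add.assoc)
qed

lemma B_lo: assumes x: "x \<in> carrier_vec NN"
  shows "Bf 0 \<rho> (AF *\<^sub>v x) = Bf (p - 1) (\<lambda>c'. \<Sum>r<p - 1. \<rho> r * delta_entry p 1 r c') x"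
proof -
  have "Bf 0 \<rho> (AF *\<^sub>v x) = (\<Sum>c<p - 1. of_int (\<rho> c) * (\<Sum>c'<p - 1. of_int (delta_entry p 1 c c') * x $ (oa + ((p - 1) * (p - 1) + c'))))"
    unfolding Bf_def
  proof (intro sum.cong refl)
    fix c assume "c \<in> {..<p - 1}"
    then have c: "c < p - 1" by simp
    have "p - 1 \<le> p * (p - 1)" using p2 by simp
    then have r: "c < d2" using c unfolding d2_eq by linarith
    have "(AF *\<^sub>v x) $ (oa + 0 * (p - 1) + c) = (\<Sum>c'<d2. of_int (delta_entry p 2 c c') * x $ (oa + c'))"
      using V2[OF x r] by simp
    also have "\<dots> = (\<Sum>c'<p - 1. of_int (delta_entry p 1 c c') * x $ (oa + ((p - 1) * (p - 1) + c')))"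
      using delta_shift_lo[OF p2, of c 0 "\<lambda>c'. x $ (oa + c')"] c unfolding two_facts by simp
    finally show "of_int (\<rho> c) * (AF *\<^sub>v x) $ (oa + 0 * (p - 1) + c) = of_int (\<rho> c) * (\<Sum>c'<p - 1. of_int (delta_entry p 1 c c') * x $ (oa + ((p - 1) * (p - 1) + c')))"
      by simp
  qed
  also have "\<dots> = (\<Sum>c'<p - 1. of_int (\<Sum>r<p - 1. \<rho> r * delta_entry p 1 r c') * x $ (oa + ((p - 1) * (p - 1) + c')))"
    by (simp add: sum_distrib_left sum_distrib_right of_int_sum mult.assoc) (rule sum.swap)
  also have "\<dots> = Bf (p - 1) (\<lambda>c'. \<Sum>r<p - 1. \<rho> r * delta_entry p 1 r c') x"
    unfolding Bf_def by (simp add: add.assoc)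
  finally show ?thesis .
qed

end

context L begin

lemma B_iter: assumes x: "x \<in> carrier_vec NN" and j: "j \<le> p - 1"
  shows "Bf (p - 1) \<rho> ((AF::'a::comm_ring_1 mat) ^\<^sub>m j *\<^sub>v x) = Bf (p - 1 - j) \<rho> x"
  using x j
proof (induct j arbitrary: x)
  case 0 then show ?case by simp
next
  case (Suc j)
  have Ax: "(AF::'a mat) *\<^sub>v x \<in> carrier_vec NN" unfolding carrier_vec_def by simp
  have "Bf (p - 1) \<rho> ((AF::'a mat) ^\<^sub>m Suc j *\<^sub>v x) = Bf (p - 1) \<rho> (AF ^\<^sub>m j *\<^sub>v (AF *\<^sub>v x))"
    using AF_pow_Suc[OF Suc(2)] by simp
  also have "\<dots> = Bf (p - 1 - j) \<rho> ((AF::'a mat) *\<^sub>v x)" using Suc(1)[OF Ax] Suc(3) by simp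
  also have "\<dots> = Bf (p - 1 - j - 1) \<rho> x" by (rule B_hi[OF Suc(2)]) (use Suc(3) in auto)
  finally show ?case by simp
qed

lemma B_p: assumes x: "x \<in> carrier_vec NN"
  shows "Bf (p - 1) \<rho> ((AF::'a::comm_ring_1 mat) ^\<^sub>m p *\<^sub>v x) = Bf (p - 1) (\<lambda>c'. \<Sum>r<p - 1. \<rho> r * delta_entry p 1 r c') x"
proof -
  have Ax: "(AF::'a mat) *\<^sub>v x \<in> carrier_vec NN" unfolding carrier_vec_def by simp
  have pp: "p = Suc (p - 1)" using p2 by simp
  have "Bf (p - 1) \<rho> ((AF::'a mat) ^\<^sub>m p *\<^sub>v x) = Bf (p - 1) \<rho> (AF ^\<^sub>m (p - 1) *\<^sub>v (AF *\<^sub>v x))"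
    using AF_pow_Suc[OF x, of "p - 1"] pp by simp
  also have "\<dots> = Bf 0 \<rho> ((AF::'a mat) *\<^sub>v x)" using B_iter[OF Ax, of "p - 1"] by simp
  also have "\<dots> = Bf (p - 1) (\<lambda>c'. \<Sum>r<p - 1. \<rho> r * delta_entry p 1 r c') x" by (rule B_lo[OF x])
  finally show ?thesis .
qed

definition rho :: "nat \<Rightarrow> nat \<Rightarrow> int" where
  "rho l c = of_bool (l mod p + c = p - 2) - of_bool (l mod p + c = p - 1)"

lemma rho_delta: assumes c: "c < p - 1"
  shows "(\<Sum>r<p - 1. rho l r * delta_entry p 1 r c) = rho (Suc l) c"
proof -
  let ?u = "l mod p"
  have u: "?u < p" using p2 by simp
  have u': "Suc l mod p = (if ?u = p - 1 then 0 else Suc ?u)"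
  proof -
    have "Suc l mod p = (if Suc ?u = p then 0 else Suc ?u)" by (rule mod_Suc)
    moreover have "(Suc ?u = p) = (?u = p - 1)" using u by auto
    ultimately show ?thesis by simp
  qed
  show ?thesis
  proof (cases "c + 2 < p")
    case True
    have "(\<Sum>r<p - 1. rho l r * delta_entry p 1 r c) = (\<Sum>r<p - 1. of_bool (r = c + 1) * rho l r)"
      using True by (intro sum.cong refl) simp
    also have "\<dots> = rho l (c + 1)" using True by (subst sum_delta_nat) simp
    also have "\<dots> = rho (Suc l) c" unfolding rho_def u' using True u by auto
    finally show ?thesis .
  next
    case False
    then have cv: "c = p - 2" using c by simp
    have "(\<Sum>r<p - 1. rho l r * delta_entry p 1 r c) = - (\<Sum>r<p - 1. rho l r)"
      using False by (simp add: sum_negf)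
    also have "\<dots> = - (of_bool (?u \<le> p - 2 \<and> p - 2 - ?u < p - 1) - of_bool (?u \<le> p - 1 \<and> p - 1 - ?u < p - 1))"
      unfolding rho_def sum_subtractf sum_ind ..
    also have "\<dots> = rho (Suc l) c"
    proof (cases "?u = p - 1")
      case True
      have "\<not> (?u \<le> p - 2)" "?u \<le> p - 1 \<and> p - 1 - ?u < p - 1" using True p2 by auto
      then show ?thesis unfolding rho_def u' cv using True p2 by simp
    next
      case F1: False
      show ?thesis
      proof (cases "?u = 0")
        case True
        have "?u \<le> p - 2 \<and> p - 2 - ?u < p - 1" "\<not> (p - 1 - ?u < p - 1)"
          "Suc ?u + (p - 2) \<noteq> p - 2" "Suc ?u + (p - 2) = p - 1" using True p2 by auto
        then show ?thesis unfolding rho_def u' cv using F1 True by simp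
      next
        case F2: False
        have u2: "?u < p" using p2 by simp
        have "?u \<le> p - 2" using F1 u2 by arith
        moreover have "p - 2 - ?u < p - 1" using F2 p2 by arith
        moreover have "?u \<le> p - 1" using u2 by arith
        moreover have "p - 1 - ?u < p - 1" using F2 p2 by arith
        moreover have "Suc ?u + (p - 2) \<noteq> p - 2" "Suc ?u + (p - 2) \<noteq> p - 1" using F2 p2 by arith+
        ultimately have "?u \<le> p - 2 \<and> p - 2 - ?u < p - 1" "?u \<le> p - 1 \<and> p - 1 - ?u < p - 1"
          "Suc ?u + (p - 2) \<noteq> p - 2" "Suc ?u + (p - 2) \<noteq> p - 1" by auto
        then show ?thesis unfolding rho_def u' cv using F1 by simp
      qed
    qed
    finally show ?thesis .
  qed
qed

lemma B_pl: assumes x: "x \<in> carrier_vec NN"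
  shows "Bf (p - 1) (rho 0) ((AF::'a::comm_ring_1 mat) ^\<^sub>m (p * l) *\<^sub>v x) = Bf (p - 1) (rho l) x"
  using x
proof (induct l arbitrary: x)
  case 0 then show ?case by simp
next
  case (Suc l)
  have Apx: "(AF::'a mat) ^\<^sub>m p *\<^sub>v x \<in> carrier_vec NN" by (rule AF_pow_carrier)
  have "(AF::'a mat) ^\<^sub>m (p * Suc l) *\<^sub>v x = AF ^\<^sub>m (p * l) *\<^sub>v (AF ^\<^sub>m p *\<^sub>v x)"
  proof -
    have "(AF::'a mat) ^\<^sub>m (p * Suc l) = AF ^\<^sub>m (p * l) * AF ^\<^sub>m p"
      using pow_mat_add[OF AF_carrier, of "p * l" p] by (simp add: add.commute)
    then show ?thesis using AF_mult_assoc[OF Suc(2)] by simp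
  qed
  then have "Bf (p - 1) (rho 0) ((AF::'a mat) ^\<^sub>m (p * Suc l) *\<^sub>v x) = Bf (p - 1) (rho l) ((AF::'a mat) ^\<^sub>m p *\<^sub>v x)"
    using Suc(1)[OF Apx] by simp
  also have "\<dots> = Bf (p - 1) (\<lambda>c'. \<Sum>r<p - 1. rho l r * delta_entry p 1 r c') x" by (rule B_p[OF Suc(2)])
  also have "\<dots> = Bf (p - 1) (rho (Suc l)) x"
  proof (rule Bf_cong)
    fix c assume c: "c < p - 1"
    show "(\<Sum>r<p - 1. rho l r * delta_entry p 1 r c) = rho (Suc l) c" by (rule rho_delta[OF c])
  qed
  finally show ?case .
qed

lemma Gf_B: "Gf x = Bf (p - 1) (rho 0) x"
proof -
  have "Bf (p - 1) (rho 0) x = (\<Sum>c<p - 1. of_bool (c = p - 2) * x $ (oa + (p - 1) * (p - 1) + c))"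
    unfolding Bf_def rho_def by (intro sum.cong refl) auto
  also have "\<dots> = x $ (oa + (p - 1) * (p - 1) + (p - 2))" using p2 by (subst sum_delta_nat) auto
  also have "oa + (p - 1) * (p - 1) + (p - 2) = oa + d2 - 1"
  proof -
    have "p * (p - 1) = (p - 1) * (p - 1) + (p - 1)" using p2 by (cases p) auto
    then show ?thesis unfolding d2_eq using p2 by linarith
  qed
  finally show ?thesis unfolding Gf_def by simp
qed

lemma rho_sum: assumes c: "c < p - 1" shows "(\<Sum>l<p * q. rho l c) = 0"
proof -
  have "(\<Sum>l<p * q. rho l c) = (\<Sum>l<p * q. (\<lambda>u. of_bool (u + c = p - 2) - of_bool (u + c = p - 1)) (l mod p))"
    unfolding rho_def ..
  also have "\<dots> = of_nat q * (\<Sum>u<p. (of_bool (u + c = p - 2) - of_bool (u + c = p - 1) :: int))"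
    by (rule sum_mod_period)
  also have "(\<Sum>u<p. (of_bool (u + c = p - 2) - of_bool (u + c = p - 1) :: int)) = 0"
  proof -
    have "(\<Sum>u<p. (of_bool (u + c = p - 2) :: int)) = 1"
      proof -
      have "(\<Sum>u<p. (of_bool (u + c = p - 2) :: int)) = (\<Sum>u<p. (of_bool (c + u = p - 2) :: int))"
        by (intro sum.cong refl) (simp only: add.commute)
      also have "\<dots> = 1" unfolding sum_ind using c by simp
      finally show ?thesis .
    qed
    moreover have "(\<Sum>u<p. (of_bool (u + c = p - 1) :: int)) = 1"
      proof -
      have "(\<Sum>u<p. (of_bool (u + c = p - 1) :: int)) = (\<Sum>u<p. (of_bool (c + u = p - 1) :: int))"
        by (intro sum.cong refl) (simp only: add.commute)
      also have "\<dots> = 1" unfolding sum_ind using c by simp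
      finally show ?thesis .
    qed
    ultimately show ?thesis by (simp add: sum_subtractf)
  qed
  finally show ?thesis by simp
qed

lemma Lf_invariant: assumes x: "x \<in> carrier_vec NN"
  shows "Lf 0 ((AF::'a::comm_ring_1 mat) ^\<^sub>m (p ^ (s - 1)) *\<^sub>v x) = Lf 0 x"
proof -
  define q where "q = p ^ (s - 3)"
  have "s - 1 = Suc (Suc (s - 3))" using s3 by simp
  then have q: "p ^ (s - 1) = p * (p * q)" unfolding q_def by simp
  have "(\<Sum>i<p * q. Gf ((AF::'a mat) ^\<^sub>m (p * i) *\<^sub>v x)) = (\<Sum>i<p * q. Bf (p - 1) (rho i) x)"
    unfolding Gf_B B_pl[OF x] ..
  also have "\<dots> = (\<Sum>c<p - 1. of_int (\<Sum>i<p * q. rho i c) * x $ (oa + (p - 1) * (p - 1) + c))"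
    unfolding Bf_def by (subst sum.swap) (simp add: sum_distrib_right of_int_sum)
  also have "\<dots> = 0" by (simp add: rho_sum)
  finally have "(\<Sum>i<p * q. Gf ((AF::'a mat) ^\<^sub>m (p * i) *\<^sub>v x)) = 0" .
  then show ?thesis unfolding q using Lf_pl[OF x, of "p * q"] by simp
qed

end

definition zint :: "nat \<Rightarrow> int \<Rightarrow> nat \<Rightarrow> int" where
  "zint p k = (\<lambda>i. k mod int p ^ i)"

definition zneg :: "nat \<Rightarrow> (nat \<Rightarrow> int) \<Rightarrow> nat \<Rightarrow> int" where
  "zneg p x = (\<lambda>i. (- x i) mod int p ^ i)"

lemma pow_dvd_Suc: "int p ^ i dvd int p ^ Suc i" by simp

lemma zint_Zp: "p \<ge> 2 \<Longrightarrow> zint p k \<in> Zp p"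
  unfolding Zp_def zint_def using pow_dvd_Suc by (auto simp: mod_mod_cancel)

lemma zadd_Zp: assumes "p \<ge> 2" "x \<in> Zp p" "y \<in> Zp p" shows "zp_add p x y \<in> Zp p"
proof -
  have "(x (Suc k) + y (Suc k)) mod int p ^ k = (x k + y k) mod int p ^ k" for k
  proof -
    have "(x (Suc k) + y (Suc k)) mod int p ^ k = (x (Suc k) mod int p ^ k + y (Suc k) mod int p ^ k) mod int p ^ k"
      by (rule mod_add_eq[symmetric])
    also have "\<dots> = (x k + y k) mod int p ^ k" using assms(2,3) unfolding Zp_def by simp
    finally show ?thesis .
  qed
  then show ?thesis using assms(1) unfolding Zp_def zp_add_def using pow_dvd_Suc
    by (auto simp: mod_mod_cancel)
qed

lemma zmul_Zp: assumes "p \<ge> 2" "x \<in> Zp p" "y \<in> Zp p" shows "zp_mul p x y \<in> Zp p"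
proof -
  have "(x (Suc k) * y (Suc k)) mod int p ^ k = (x k * y k) mod int p ^ k" for k
  proof -
    have "(x (Suc k) * y (Suc k)) mod int p ^ k = ((x (Suc k) mod int p ^ k) * (y (Suc k) mod int p ^ k)) mod int p ^ k"
      by (rule mod_mult_eq[symmetric])
    also have "\<dots> = (x k * y k) mod int p ^ k" using assms(2,3) unfolding Zp_def by simp
    finally show ?thesis .
  qed
  then show ?thesis using assms(1) unfolding Zp_def zp_mul_def using pow_dvd_Suc
    by (auto simp: mod_mod_cancel)
qed

lemma zneg_Zp: assumes "p \<ge> 2" "x \<in> Zp p" shows "zneg p x \<in> Zp p"
proof -
  have "(- x (Suc k)) mod int p ^ k = (- x k) mod int p ^ k" for k
  proof -
    have "(- x (Suc k)) mod int p ^ k = (- (x (Suc k) mod int p ^ k)) mod int p ^ k"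
      by (rule mod_minus_eq[symmetric])
    also have "\<dots> = (- x k) mod int p ^ k" using assms(2) unfolding Zp_def by simp
    finally show ?thesis .
  qed
  then show ?thesis using assms(1) unfolding Zp_def zneg_def using pow_dvd_Suc
    by (auto simp: mod_mod_cancel)
qed

lemma zadd_zint: "zp_add p (zint p a) (zint p b) = zint p (a + b)"
  unfolding zp_add_def zint_def by (rule ext) (simp add: mod_add_eq)

lemma zadd_zneg: "zp_add p x (zneg p x) = zint p 0"
  unfolding zp_add_def zneg_def zint_def by (rule ext) (simp add: mod_add_right_eq)

lemma zone: "zp_one p = zint p 1"
  unfolding zp_one_def zint_def ..

lemma emb_props:
  fixes \<iota> :: "(nat \<Rightarrow> int) \<Rightarrow> 'f::field_char_0"
  assumes p: "p \<ge> 2" and e: "Zp_embedding p \<iota>"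
  shows "\<iota> (zint p k) = of_int k"
proof -
  have add: "\<iota> (zint p (a + b)) = \<iota> (zint p a) + \<iota> (zint p b)" for a b
    using e zint_Zp[OF p] unfolding Zp_embedding_def by (metis zadd_zint)
  have z0: "\<iota> (zint p 0) = 0" using add[of 0 0] by simp
  have one: "\<iota> (zint p 1) = 1" using e unfolding Zp_embedding_def zone by simp
  have nat: "\<iota> (zint p (int m)) = of_nat m" for m
  proof (induct m)
    case 0 then show ?case using z0 by simp
  next
    case (Suc m)
    have "\<iota> (zint p (int (Suc m))) = \<iota> (zint p (int m + 1))" by (simp add: add.commute)
    also have "\<dots> = of_nat m + 1" using add[of "int m" 1] Suc one by simp
    finally show ?case by simp
  qed
  show ?thesis
  proof (cases "k \<ge> 0")
    case True
    then show ?thesis using nat[of "nat k"] by simp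
  next
    case False
    have "\<iota> (zint p k) + \<iota> (zint p (- k)) = 0" using add[of k "- k"] z0 by simp
    moreover have "\<iota> (zint p (- k)) = of_int (- k)" using nat[of "nat (- k)"] False by simp
    ultimately show ?thesis by (simp add: add_eq_0_iff2)
  qed
qed

lemma adm_props:
  fixes K :: "'f::field_char_0 set"
  assumes pr: "prime p" and adm: "admissible_K p K"
  shows "\<And>a b. a \<in> K \<Longrightarrow> b \<in> K \<Longrightarrow> a + b \<in> K"
    and "\<And>a. a \<in> K \<Longrightarrow> - a \<in> K"
    and "\<And>k. of_int k \<in> K"
    and "1 / of_nat p \<notin> K"
proof -
  have p: "p \<ge> 2" using pr by (simp add: prime_ge_2_nat)
  have pint: "prime (int p)" using pr by simp
  have pn0: "(of_nat p :: 'f) \<noteq> 0" using p by simp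
  have "((\<forall>a\<in>K. \<forall>b\<in>K. a + b \<in> K) \<and> (\<forall>a\<in>K. - a \<in> K) \<and> (\<forall>k. of_int k \<in> K)) \<and> 1 / of_nat p \<notin> K"
  proof -
    consider "K = K_int" | "K = K_loc p" | \<iota> where "Zp_embedding p \<iota>" "K = \<iota> ` Zp p"
      using adm unfolding admissible_K_def by blast
    then show ?thesis
    proof cases
      case 1
      have A: "(\<forall>a\<in>K. \<forall>b\<in>K. a + b \<in> K) \<and> (\<forall>a\<in>K. - a \<in> K) \<and> (\<forall>k. of_int k \<in> K)"
        unfolding 1 K_int_def by (auto intro: range_eqI[of _ _ "_ + _"] range_eqI[of _ _ "- _"]
            simp flip: of_int_add of_int_minus)
      have B: "1 / of_nat p \<notin> K"
      proof
        assume "1 / of_nat p \<in> K"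
        then obtain k where k: "1 / (of_nat p :: 'f) = of_int k" unfolding 1 K_int_def by auto
        then have "(of_int (k * int p) :: 'f) = of_int 1" using pn0 by (simp add: field_simps)
        then have "k * int p = 1" by (simp only: of_int_eq_iff)
        then have "int p dvd 1" by (metis dvd_triv_right)
        then show False using p by simp
      qed
      show ?thesis using A B by blast
    next
      case 2
      have mem: "x \<in> K \<longleftrightarrow> (\<exists>a b. x = of_int a / of_int b \<and> \<not> int p dvd b)" for x
        unfolding 2 K_loc_def by auto
      have nz: "\<not> int p dvd b \<Longrightarrow> (of_int b :: 'f) \<noteq> 0" for b by auto
      have A1: "a + b \<in> K" if ha: "a \<in> K" and hb: "b \<in> K" for a b
      proof -
        obtain a1 a2 where a: "a = of_int a1 / of_int a2" "\<not> int p dvd a2" using ha mem by auto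
        obtain b1 b2 where b: "b = of_int b1 / of_int b2" "\<not> int p dvd b2" using hb mem by auto
        have "a + b = of_int (a1 * b2 + b1 * a2) / of_int (a2 * b2)"
          using a b nz[OF a(2)] nz[OF b(2)] by (simp add: field_simps)
        moreover have "\<not> int p dvd a2 * b2" using a(2) b(2) pint by (simp add: prime_dvd_mult_iff)
        ultimately show ?thesis using mem by blast
      qed
      have A2: "- a \<in> K" if ha: "a \<in> K" for a
      proof -
        obtain a1 a2 where a: "a = of_int a1 / of_int a2" "\<not> int p dvd a2" using ha mem by auto
        have "- a = of_int (- a1) / of_int a2" using a by simp
        then show ?thesis using a(2) mem by blast
      qed
      have A3: "of_int k \<in> K" for k
      proof -
        have "(of_int k :: 'f) = of_int k / of_int 1" by simp
        moreover have "\<not> int p dvd 1" using p by simp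
        ultimately show ?thesis using mem by blast
      qed
      have B: "1 / of_nat p \<notin> K"
      proof
        assume "1 / of_nat p \<in> K"
        then obtain a b where ab: "1 / (of_nat p :: 'f) = of_int a / of_int b" "\<not> int p dvd b" using mem by auto
        then have "(of_int b :: 'f) = of_int (int p * a)" using pn0 nz[OF ab(2)] by (simp add: field_simps)
        then have "b = int p * a" by (simp only: of_int_eq_iff)
        then show False using ab(2) by simp
      qed
      show ?thesis using A1 A2 A3 B by blast
    next
      case 3
      note e = 3(1)
      have inj: "inj_on \<iota> (Zp p)" and hom: "\<And>x y. x \<in> Zp p \<Longrightarrow> y \<in> Zp p \<Longrightarrow> \<iota> (zp_add p x y) = \<iota> x + \<iota> y \<and> \<iota> (zp_mul p x y) = \<iota> x * \<iota> y"
        and one: "\<iota> (zp_one p) = 1"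
        using e unfolding Zp_embedding_def by auto
      have A1: "a + b \<in> K" if ha: "a \<in> K" and hb: "b \<in> K" for a b
      proof -
        obtain x y where "x \<in> Zp p" "y \<in> Zp p" "a = \<iota> x" "b = \<iota> y" using ha hb 3(2) by auto
        then show ?thesis using hom zadd_Zp[OF p] 3(2) by (metis image_eqI)
      qed
      have A2: "- a \<in> K" if ha: "a \<in> K" for a
      proof -
        obtain x where x: "x \<in> Zp p" "a = \<iota> x" using ha 3(2) by auto
        have "\<iota> x + \<iota> (zneg p x) = \<iota> (zint p 0)" using hom[OF x(1) zneg_Zp[OF p x(1)]] zadd_zneg by metis
        also have "\<dots> = 0" using emb_props[OF p e] by simp
        finally have "- a = \<iota> (zneg p x)" using x(2) by (simp add: add_eq_0_iff)
        then show ?thesis using zneg_Zp[OF p x(1)] 3(2) by auto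
      qed
      have A3: "of_int k \<in> K" for k
        using emb_props[OF p e, of k] zint_Zp[OF p, of k] 3(2) by (metis image_eqI)
      have B: "1 / of_nat p \<notin> K"
      proof
        assume "1 / of_nat p \<in> K"
        then obtain x where x: "x \<in> Zp p" "1 / of_nat p = \<iota> x" using 3(2) by auto
        have "\<iota> (zp_mul p (zint p (int p)) x) = \<iota> (zint p (int p)) * \<iota> x" using hom[OF zint_Zp[OF p] x(1)] by simp
        also have "\<dots> = 1"
        proof -
          have "\<iota> x = 1 / of_nat p" using x(2) by simp
          then show ?thesis using emb_props[OF p e, of "int p"] pn0 by simp
        qed
        finally have "\<iota> (zp_mul p (zint p (int p)) x) = \<iota> (zp_one p)" using one by simp
        then have "zp_mul p (zint p (int p)) x = zp_one p"
          using inj zmul_Zp[OF p zint_Zp[OF p] x(1)] zint_Zp[OF p] zone by (metis inj_onD)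
        then have "zp_mul p (zint p (int p)) x 1 = zp_one p 1" by simp
        then show False using p unfolding zp_mul_def zp_one_def zint_def by simp
      qed
      show ?thesis using A1 A2 A3 B by blast
    qed
  qed
  then show "\<And>a b. a \<in> K \<Longrightarrow> b \<in> K \<Longrightarrow> a + b \<in> K" "\<And>a. a \<in> K \<Longrightarrow> - a \<in> K" "\<And>k. of_int k \<in> K"
    "1 / of_nat p \<notin> K" by blast+
qed

lemma sum_in_K: assumes add: "\<forall>a\<in>K. \<forall>b\<in>K. a + b \<in> K" and z: "0 \<in> K"
  and f: "\<forall>i\<in>A. f i \<in> K" and fin: "finite A"
  shows "sum f A \<in> K"
  using fin f by (induct A rule: finite_induct) (auto simp: z add)

context L begin

lemma idx_K1: "r < p - 1 \<Longrightarrow> n + r < NN" using oa_ge NN_eq by simp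

lemma idx_Ks: assumes q: "q < n" and k: "k < p" and r: "r < DD"
  shows "ob + q*ds + k*DD + r < NN"
proof -
  have "k*DD + r < k*DD + DD" using r by simp
  also have "\<dots> = Suc k * DD" by simp
  also have "\<dots> \<le> p * DD" using k by (intro mult_le_mono1) simp
  finally have a: "k*DD + r < ds" using ds_DD by simp
  have "q*ds + ds \<le> n*ds" using q by (metis Suc_leI add.commute mult_Suc mult_le_mono1)
  then show ?thesis using a unfolding NN_def by simp
qed

lemma Lf_diff: fixes a b :: "'a::comm_ring_1 vec"
  assumes a: "a \<in> carrier_vec NN" and b: "b \<in> carrier_vec NN" and j: "j \<le> p - 1"
  shows "Lf j (a - b) = Lf j a - Lf j b"
proof -
  have m: "i < NN \<Longrightarrow> (a - b) $ i = a $ i - b $ i" for i using a b by simp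
  have k: "p - 1 - j < p" using p2 by simp
  have U: "q < n \<Longrightarrow> usum q (p - 1 - j) (a - b) = usum q (p - 1 - j) a - usum q (p - 1 - j) b" for q
    unfolding usum_def sum_subtractf[symmetric]
  proof (rule sum.cong[OF refl])
    fix r assume q: "q < n" and "r \<in> {..<DD}"
    then have "ob + q*ds + (p - 1 - j)*DD + r < NN" by (intro idx_Ks[OF q k]) simp
    then show "(a - b) $ (ob + q*ds + (p - 1 - j)*DD + r) = a $ (ob + q*ds + (p - 1 - j)*DD + r) - b $ (ob + q*ds + (p - 1 - j)*DD + r)"
      by (rule m)
  qed
  have S: "(\<Sum>r<p - 1. of_int (wt j r) * (a - b) $ (n + r)) = (\<Sum>r<p - 1. of_int (wt j r) * a $ (n + r)) - (\<Sum>r<p - 1. of_int (wt j r) * b $ (n + r))"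
    unfolding sum_subtractf[symmetric]
  proof (rule sum.cong[OF refl])
    fix r assume "r \<in> {..<p - 1}"
    then have "n + r < NN" by (simp add: idx_K1)
    then show "of_int (wt j r) * (a - b) $ (n + r) = of_int (wt j r) * a $ (n + r) - of_int (wt j r) * b $ (n + r)"
      using m by (simp add: right_diff_distrib)
  qed
  have z: "(a - b) $ 0 = a $ 0 - b $ 0" using m idx_facts by simp
  have n0: "0 < n" using n1 by simp
  show ?thesis unfolding Lf_def z S U[OF n0]
    using U[of 1] by (cases "2 \<le> n") (simp_all add: algebra_simps)
qed

lemma Lf_e0: "Lf 0 (c \<cdot>\<^sub>v unit_vec NN 0) = (c :: 'a::comm_ring_1)"
proof -
  have e: "i < NN \<Longrightarrow> (c \<cdot>\<^sub>v unit_vec NN 0) $ i = (if i = 0 then c else 0)" for i by simp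
  have k: "p - 1 - 0 < p" using p2 by simp
  have U: "q < n \<Longrightarrow> usum q (p - 1 - 0) (c \<cdot>\<^sub>v unit_vec NN 0) = 0" for q
  proof -
    assume q: "q < n"
    have "ob > 0" using n1 n_le_oa oa_ob by simp
    show ?thesis unfolding usum_def
    proof (rule sum.neutral, rule ballI)
      fix r assume "r \<in> {..<DD}"
      then have "ob + q*ds + (p - 1 - 0)*DD + r < NN" by (intro idx_Ks[OF q k]) simp
      moreover have "ob + q*ds + (p - 1 - 0)*DD + r \<noteq> 0" using \<open>ob > 0\<close> by simp
      ultimately show "(c \<cdot>\<^sub>v unit_vec NN 0) $ (ob + q*ds + (p - 1 - 0)*DD + r) = 0"
        using e by presburger
    qed
  qed
  have S: "(\<Sum>r<p - 1. of_int (wt 0 r) * (c \<cdot>\<^sub>v unit_vec NN 0) $ (n + r)) = 0"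
  proof (rule sum.neutral, rule ballI)
    fix r assume "r \<in> {..<p - 1}"
    then have b: "n + r < NN" by (simp add: idx_K1)
    have nz: "n + r \<noteq> 0" using n1 by simp
    show "of_int (wt 0 r) * (c \<cdot>\<^sub>v unit_vec NN 0) $ (n + r) = 0"
      unfolding e[OF b] if_not_P[OF nz] by simp
  qed
  show ?thesis unfolding Lf_def S using U[of 0] U[of 1] n1 idx_facts by simp
qed

lemma Lf_in_K: assumes hadd: "\<And>a b. a \<in> K \<Longrightarrow> b \<in> K \<Longrightarrow> a + b \<in> K" and hneg: "\<And>a. a \<in> K \<Longrightarrow> - a \<in> K"
  and hz: "(0::'a::comm_ring_1) \<in> K" and y: "y \<in> carrier_vec NN" and yK: "\<And>i. i < NN \<Longrightarrow> y $ i \<in> K"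
  shows "Lf 0 y \<in> K"
proof -
  have addK: "\<forall>a\<in>K. \<forall>b\<in>K. a + b \<in> K" using hadd by blast
  have k: "p - 1 - 0 < p" using p2 by simp
  have U: "usum q (p - 1 - 0) y \<in> K" if q: "q < n" for q
  proof -
    have "\<forall>r\<in>{..<DD}. y $ (ob + q*ds + (p - 1 - 0)*DD + r) \<in> K"
    proof
      fix r assume "r \<in> {..<DD}"
      then have "ob + q*ds + (p - 1 - 0)*DD + r < NN" by (intro idx_Ks[OF q k]) simp
      then show "y $ (ob + q*ds + (p - 1 - 0)*DD + r) \<in> K" by (rule yK)
    qed
    then show ?thesis unfolding usum_def by (intro sum_in_K[OF addK hz]) simp_all
  qed
  have w: "r < p - 1 \<Longrightarrow> wt 0 r = 1" for r unfolding wt_def by simp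
  have "\<forall>r\<in>{..<p - 1}. of_int (wt 0 r) * y $ (n + r) \<in> K"
  proof
    fix r assume "r \<in> {..<p - 1}"
    then have "r < p - 1" by simp
    then show "of_int (wt 0 r) * y $ (n + r) \<in> K" using w yK idx_K1 by simp
  qed
  then have S: "(\<Sum>r<p - 1. of_int (wt 0 r) * y $ (n + r)) \<in> K"
    by (intro sum_in_K[OF addK hz]) simp_all
  have "y $ 0 \<in> K" using yK idx_facts by simp
  then have "y $ 0 - (\<Sum>r<p - 1. of_int (wt 0 r) * y $ (n + r)) \<in> K"
    using hadd[OF _ hneg[OF S]] by simp
  then show ?thesis unfolding Lf_def using hadd U[of 0] U[of 1] n1 hz by auto
qed
end

theorem lemma6:
  fixes p s n :: nat and K :: "'f::field_char_0 set"
  assumes "prime p" and "s \<ge> 3" and "n \<ge> 1" and "admissible_K p K"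
  shows "(\<forall>i<p ^ s. \<forall>j<p ^ s.
            in_lattice K (T_rep p s n ((i + j) mod p ^ s)
               - (act p s n i *\<^sub>v T_rep p s n j + T_rep p s n i)))
       \<and> \<not> (\<exists>x \<in> carrier_vec (rankN p s n).
            in_lattice K (T_rep p s n (p ^ (s - 1))
               - (act p s n (p ^ (s - 1)) *\<^sub>v x - x)))"
proof -
  have p2: "p \<ge> 2" using assms(1) by (simp add: prime_ge_2_nat)
  interpret L p s n using p2 assms(2,3) by unfold_locales
  note Kp = adm_props[OF assms(1) assms(4)]
  have z: "(0::'f) \<in> K" using Kp(3)[of 0] by simp
  have rk: "rankN p s n = NN" unfolding rankN_def using AM_carrier unfolding AM_def by simp
  have act: "act p s n j = (AF :: 'f mat) ^\<^sub>m j" for j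
    unfolding act_def AF_def AM_def by (rule of_int_hom.mat_hom_pow[OF AM_carrier[unfolded AM_def]])
  have T: "T_rep p s n j = (of_nat j / of_nat (p ^ s) :: 'f) \<cdot>\<^sub>v unit_vec NN 0" for j
    unfolding T_rep_def rk ..
  have e0: "(AF :: 'f mat) ^\<^sub>m i *\<^sub>v unit_vec NN 0 = unit_vec NN 0" for i
  proof (induct i)
    case 0 then show ?case by simp
  next
    case (Suc i)
    have "(AF :: 'f mat) ^\<^sub>m Suc i *\<^sub>v unit_vec NN 0 = AF ^\<^sub>m i *\<^sub>v (AF *\<^sub>v unit_vec NN 0)"
      by (rule AF_pow_Suc[OF unit_vec_carrier])
    also have "\<dots> = unit_vec NN 0" unfolding VC by (rule Suc)
    finally show ?case .
  qed
  have Pn0: "(of_nat (p ^ s) :: 'f) \<noteq> 0" using p2 by simp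
  have part1: "in_lattice K (T_rep p s n ((i + j) mod p ^ s) - (act p s n i *\<^sub>v T_rep p s n j + T_rep p s n i))"
    for i j
  proof -
    let ?P = "p ^ s"
    have "act p s n i *\<^sub>v T_rep p s n j = (of_nat j / of_nat ?P :: 'f) \<cdot>\<^sub>v unit_vec NN 0"
      unfolding act T using mult_mat_vec[OF pow_carrier_mat[OF AF_carrier[where 'a='f]] unit_vec_carrier] e0 by simp
    then have v: "T_rep p s n ((i + j) mod ?P) - (act p s n i *\<^sub>v T_rep p s n j + T_rep p s n i)
      = (of_int (- int ((i + j) div ?P)) :: 'f) \<cdot>\<^sub>v unit_vec NN 0"
    proof -
      assume h: "act p s n i *\<^sub>v T_rep p s n j = (of_nat j / of_nat ?P :: 'f) \<cdot>\<^sub>v unit_vec NN 0"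
      have c: "(of_nat ((i + j) mod ?P) / of_nat ?P - (of_nat j / of_nat ?P + of_nat i / of_nat ?P) :: 'f)
          = of_int (- int ((i + j) div ?P))"
      proof -
        have "(i + j) mod ?P = i + j - ?P * ((i + j) div ?P)" by (simp add: minus_div_mult_eq_mod[symmetric] mult.commute)
        have "(of_nat ((i + j) mod ?P) :: 'f) = of_nat i + of_nat j - of_nat ?P * of_nat ((i + j) div ?P)"
        proof -
          have "?P * ((i + j) div ?P) \<le> i + j" using div_times_less_eq_dividend[of "i + j" ?P] by (simp add: mult.commute)
          then show ?thesis using \<open>(i + j) mod ?P = i + j - ?P * ((i + j) div ?P)\<close> by (simp add: of_nat_diff)
        qed
        then show ?thesis using Pn0 by (simp add: field_simps)
      qed
      let ?e = "unit_vec NN 0 :: 'f vec"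
      let ?a = "of_nat ((i + j) mod ?P) / of_nat ?P :: 'f"
      let ?b = "of_nat j / of_nat ?P :: 'f"
      let ?c = "of_nat i / of_nat ?P :: 'f"
      have "T_rep p s n ((i + j) mod ?P) - (act p s n i *\<^sub>v T_rep p s n j + T_rep p s n i)
          = ?a \<cdot>\<^sub>v ?e - (?b \<cdot>\<^sub>v ?e + ?c \<cdot>\<^sub>v ?e)"
        unfolding h by (simp only: T)
      also have "\<dots> = (?a - (?b + ?c)) \<cdot>\<^sub>v ?e"
        by (rule eq_vecI) (simp_all add: algebra_simps)
      also have "\<dots> = (of_int (- int ((i + j) div ?P)) :: 'f) \<cdot>\<^sub>v unit_vec NN 0" unfolding c ..
      finally show ?thesis .
    qed
    have dK: "(of_int (- int ((i + j) div ?P)) :: 'f) \<in> K" by (rule Kp(3))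
    show ?thesis unfolding v in_lattice_def
    proof (intro allI impI)
      fix k assume "k < dim_vec ((of_int (- int ((i + j) div ?P)) :: 'f) \<cdot>\<^sub>v unit_vec NN 0)"
      then have k: "k < NN" by simp
      show "((of_int (- int ((i + j) div ?P)) :: 'f) \<cdot>\<^sub>v unit_vec NN 0) $ k \<in> K"
      proof (cases "k = 0")
        case True then show ?thesis using k dK by simp
      next
        case False then show ?thesis using k z by simp
      qed
    qed
  qed
  have part2: False if x: "x \<in> carrier_vec (rankN p s n)"
    and yK: "in_lattice K (T_rep p s n (p ^ (s - 1)) - (act p s n (p ^ (s - 1)) *\<^sub>v x - x))" for x
  proof -
    let ?m = "p ^ (s - 1)"
    have x': "x \<in> carrier_vec NN" using x rk by simp
    let ?y = "T_rep p s n ?m - ((AF :: 'f mat) ^\<^sub>m ?m *\<^sub>v x - x)"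
    have Ax: "(AF :: 'f mat) ^\<^sub>m ?m *\<^sub>v x \<in> carrier_vec NN" by (rule AF_pow_carrier)
    have Tc: "(T_rep p s n ?m :: 'f vec) \<in> carrier_vec NN" unfolding T by simp
    have yc: "?y \<in> carrier_vec NN" using Tc Ax x' by simp
    have "Lf 0 ?y = Lf 0 (T_rep p s n ?m) - (Lf 0 ((AF :: 'f mat) ^\<^sub>m ?m *\<^sub>v x) - Lf 0 x)"
      using Lf_diff[OF Tc _ , of "(AF :: 'f mat) ^\<^sub>m ?m *\<^sub>v x - x"] Lf_diff[OF Ax x'] Ax x' by simp
    also have "\<dots> = Lf 0 (T_rep p s n ?m)" using Lf_invariant[OF x'] by simp
    also have "\<dots> = of_nat ?m / of_nat (p ^ s)" unfolding T by (rule Lf_e0)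
    also have "\<dots> = 1 / of_nat p"
    proof -
      have "p ^ s = p * ?m" using assms(2) by (metis Suc_diff_1 le_trans numeral_le_one_iff power_Suc semiring_norm(70) not_less_eq_eq zero_less_iff_neq_zero le_zero_eq power_0 one_le_numeral)
      moreover have "(of_nat ?m :: 'f) \<noteq> 0" using p2 by simp
      ultimately show ?thesis by simp
    qed
    finally have L: "Lf 0 ?y = 1 / (of_nat p :: 'f)" .
    have "Lf 0 ?y \<in> K"
    proof (rule Lf_in_K[OF Kp(1) Kp(2) z yc])
      fix i assume i: "i < NN"
      have yl: "\<forall>i<dim_vec ?y. ?y $ i \<in> K" using yK unfolding in_lattice_def act .
      have "i < dim_vec ?y" using x' i by simp
      with yl show "?y $ i \<in> K" by blast
    qed
    then show False using L Kp(4) by simp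
  qed
  show ?thesis using part1 part2 by blast
qed

end
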